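(* Let $M\subset\mathbb{R}^{2d}$ satisfy the standing assumptions below, let $T$ be its outer symplectic billiard map and $H$ the function defined below, and write $|x|_H:=H(x)$. There exist constants $\Lambda>0$ and $\bar C>0$, depending only on $M$, such that for every $x$ with $|x|_H\ge\Lambda$ and every integer $k\ge1$, $$\big|\,|T^{2k}(x)|_H^2-|x|_H^2\,\big|\le \bar C\,k.$$
   Context: Equip $\mathbb{R}^{2d}$ with the standard inner product, norm $|\cdot|$, complex structure $J$ ($J^2=-I$, orthogonal) and symplectic form $\omega(u,v)=\langle Ju,v\rangle$. Standing assumptions: $M\subset\mathbb{R}^{2d}$ is a smooth closed hypersurface bounding a strictly convex domain containing the origin in its interior, and $M$ is a level set of a smooth function with positive definite Hessian. For a hypersurface $Q$ of this kind and $q\in Q$, the Reeb vector $R_Q(q)$ is the unique vector with $\omega(v,R_Q(q))=0$ for all $v\in T_qQ$ and $\omega(q,R_Q(q))=1$; the symplectic polar is $Q^*=\{R_Q(q):q\in Q\}$. Write $a\sim b$ if $a=\lambda b$, $\lambda>0$. For $x$ in the exterior of $M$ let $m_-(x)\in M$ be the unique point with $m_-(x)-x\sim R_M(m_-(x))$, and $T(x)=2m_-(x)-x$ (outer symplectic billiard map). Let $\overline M$ be the symmetrization of $M$, i.e. the boundary of the Minkowski sum of the domain bounded by $M$ and its reflection in the origin (support function $p(v)+p(-v)$ if $p$ is that of $M$), and $N=(\overline M)^*$. Let $H$ be the positively $1$-homogeneous function with $N=\{H=1\}$; it is a norm on $\mathbb{R}^{2d}$. *)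

theory Defs
  imports "HOL-Analysis.Analysis"
begin

text \<open>Phase space R^{2d} is modelled as (real^'d) \<times> (real^'d), with the product
  (Euclidean) inner product. Standard complex structure J(x,y) = (-y,x).\<close>

type_synonym 'd phase = "(real^'d) \<times> (real^'d)"

definition cJ :: "'d::finite phase \<Rightarrow> 'd phase" where
  "cJ u = (- snd u, fst u)"

definition symp :: "'d::finite phase \<Rightarrow> 'd phase \<Rightarrow> real" where
  "symp u v = inner (cJ u) v"

fun Ck :: "nat \<Rightarrow> ('a::euclidean_space \<Rightarrow> real) \<Rightarrow> bool" where
  "Ck 0 f = continuous_on UNIV f"
| "Ck (Suc k) f = (f differentiable_on UNIV \<and> continuous_on UNIV f \<and>
      (\<forall>v. Ck k (\<lambda>x. frechet_derivative f (at x) v)))"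

definition smooth_fun :: "('a::euclidean_space \<Rightarrow> real) \<Rightarrow> bool" where
  "smooth_fun f \<longleftrightarrow> (\<forall>k. Ck k f)"

definition posdef_hessian :: "('a::euclidean_space \<Rightarrow> real) \<Rightarrow> bool" where
  "posdef_hessian f \<longleftrightarrow> (\<forall>x v. v \<noteq> 0 \<longrightarrow>
     frechet_derivative (\<lambda>y. frechet_derivative f (at y) v) (at x) v > 0)"

definition tangent_space :: "'a::euclidean_space set \<Rightarrow> 'a \<Rightarrow> 'a set" where
  "tangent_space Q q = {v. \<exists>\<gamma> e. e > 0 \<and> \<gamma> 0 = q \<and>
      (\<forall>t\<in>{-e<..<e}. \<gamma> t \<in> Q) \<and> (\<gamma> has_vector_derivative v) (at 0)}"

definition reeb :: "'d::finite phase set \<Rightarrow> 'd phase \<Rightarrow> 'd phase" where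
  "reeb Q q = (THE r. (\<forall>v\<in>tangent_space Q q. symp v r = 0) \<and> symp q r = 1)"

definition symp_polar :: "'d::finite phase set \<Rightarrow> 'd phase set" where
  "symp_polar Q = reeb Q ` Q"

definition m_minus :: "'d::finite phase set \<Rightarrow> 'd phase \<Rightarrow> 'd phase" where
  "m_minus M x = (THE m. m \<in> M \<and> (\<exists>l>0. m - x = l *\<^sub>R reeb M m))"

definition osb_map :: "'d::finite phase set \<Rightarrow> 'd phase \<Rightarrow> 'd phase" where
  "osb_map M x = 2 *\<^sub>R m_minus M x - x"

text \<open>Symmetrization: boundary of K + (-K), K the convex domain bounded by M
  (= convex hull of M).\<close>
definition symmetrization :: "'d::finite phase set \<Rightarrow> 'd phase set" where
  "symmetrization M = frontier {a - b | a b. a \<in> convex hull M \<and> b \<in> convex hull M}"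

text \<open>H: the positively 1-homogeneous function with {H = 1} = N.\<close>
definition gauge_of :: "'d::finite phase set \<Rightarrow> 'd phase \<Rightarrow> real" where
  "gauge_of N x = (if x = 0 then 0 else (THE t. t > 0 \<and> (1 / t) *\<^sub>R x \<in> N))"

definition Hfun :: "'d::finite phase set \<Rightarrow> 'd phase \<Rightarrow> real" where
  "Hfun M = gauge_of (symp_polar (symmetrization M))"

end

theory Submission
  imports Defs
begin

lemma second_order_lb:
  fixes \<phi> \<psi> \<kappa> :: "real \<Rightarrow> real"
  assumes d1: "\<And>t. t \<in> {0..1} \<Longrightarrow> (\<phi> has_real_derivative \<psi> t) (at t)"
    and d2: "\<And>t. t \<in> {0..1} \<Longrightarrow> (\<psi> has_real_derivative \<kappa> t) (at t)"
    and lb: "\<And>t. t \<in> {0..1} \<Longrightarrow> \<kappa> t \<ge> \<beta>"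
  shows "\<phi> 1 \<ge> \<phi> 0 + \<psi> 0 + \<beta> / 2"
proof -
  have h: "\<psi> 0 \<le> \<psi> t - \<beta> * t" if "t \<in> {0..1}" for t
  proof -
    have "(\<lambda>s. \<psi> s - \<beta> * s) 0 \<le> (\<lambda>s. \<psi> s - \<beta> * s) t"
    proof (rule DERIV_nonneg_imp_nondecreasing[of 0 t])
      show "0 \<le> t" using that by auto
      fix x assume x: "0 \<le> x" "x \<le> t"
      then have "x \<in> {0..1}" using that by auto
      then have "((\<lambda>s. \<psi> s - \<beta> * s) has_real_derivative \<kappa> x - \<beta>) (at x)"
        by (auto intro!: derivative_eq_intros d2)
      moreover have "\<kappa> x - \<beta> \<ge> 0" using lb[OF \<open>x \<in> {0..1}\<close>] by simp
      ultimately show "\<exists>y. ((\<lambda>s. \<psi> s - \<beta> * s) has_real_derivative y) (at x) \<and> 0 \<le> y" by blast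
    qed
    then show ?thesis by simp
  qed
  have "(\<lambda>s. \<phi> s - s * \<psi> 0 - \<beta> * s^2 / 2) 0 \<le> (\<lambda>s. \<phi> s - s * \<psi> 0 - \<beta> * s^2 / 2) 1"
  proof (rule DERIV_nonneg_imp_nondecreasing[of 0 1])
    fix x :: real assume x: "0 \<le> x" "x \<le> 1"
    then have xx: "x \<in> {0..1}" by auto
    have "((\<lambda>s. \<phi> s - s * \<psi> 0 - \<beta> * s^2 / 2) has_real_derivative \<psi> x - \<psi> 0 - \<beta> * x) (at x)"
      by (rule derivative_eq_intros d1[OF xx] | simp)+
    moreover have "\<psi> x - \<psi> 0 - \<beta> * x \<ge> 0" using h[OF xx] by simp
    ultimately show "\<exists>y. ((\<lambda>s. \<phi> s - s * \<psi> 0 - \<beta> * s^2 / 2) has_real_derivative y) (at x) \<and> 0 \<le> y" by blast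
  qed simp
  then show ?thesis by simp
qed

locale setting =
  fixes M D :: "'d::finite phase set" and F :: "'d phase \<Rightarrow> real" and c :: real
  assumes cpt: "compact D" and cvx: "convex D" and int0: "0 \<in> interior D"
    and MD: "M = frontier D" and sm: "smooth_fun F" and pd: "posdef_hessian F"
    and MF: "M = {x. F x = c}"
    and nz: "\<And>q. q \<in> M \<Longrightarrow> frechet_derivative F (at q) \<noteq> (\<lambda>_. 0)"
begin

abbreviation "DF x \<equiv> frechet_derivative F (at x)"
abbreviation "D2 x v \<equiv> frechet_derivative (\<lambda>y. DF y v) (at x)"

lemma Ck2: "Ck (Suc (Suc 0)) F"
  using sm unfolding smooth_fun_def by blast

lemma Ck2':
  "F differentiable_on UNIV" "continuous_on UNIV F"
  "\<And>v. (\<lambda>y. DF y v) differentiable_on UNIV" "\<And>v. continuous_on UNIV (\<lambda>y. DF y v)"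
  "\<And>v w. continuous_on UNIV (\<lambda>x. D2 x v w)"
proof -
  have A: "F differentiable_on UNIV \<and> continuous_on UNIV F \<and> (\<forall>v. Ck (Suc 0) (\<lambda>x. DF x v))"
    using Ck2 by (simp only: Ck.simps simp_thms)
  have B: "(\<lambda>x. DF x v) differentiable_on UNIV \<and> continuous_on UNIV (\<lambda>x. DF x v) \<and>
      (\<forall>w. Ck 0 (\<lambda>x. D2 x v w))" for v
  proof -
    have "Ck (Suc 0) (\<lambda>x. DF x v)" using A by blast
    then show ?thesis by (simp only: Ck.simps simp_thms)
  qed
  show "F differentiable_on UNIV" "continuous_on UNIV F" using A by auto
  show "\<And>v. (\<lambda>y. DF y v) differentiable_on UNIV" "\<And>v. continuous_on UNIV (\<lambda>y. DF y v)"
    using B by auto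
  show "\<And>v w. continuous_on UNIV (\<lambda>x. D2 x v w)" using B by (simp only: Ck.simps simp_thms)
qed

lemma F_der: "(F has_derivative DF x) (at x)"
proof -
  have "F differentiable (at x)" using Ck2'(1) by (meson UNIV_I differentiable_on_def)
  then show ?thesis using frechet_derivative_works by blast
qed

lemma g_der: "((\<lambda>y. DF y v) has_derivative D2 x v) (at x)"
proof -
  have "(\<lambda>y. DF y v) differentiable (at x)" using Ck2'(3) by (meson UNIV_I differentiable_on_def)
  then show ?thesis using frechet_derivative_works by blast
qed

lemma F_cont: "continuous_on UNIV F"
  using Ck2' by simp

lemma DF_cont: "continuous_on UNIV (\<lambda>x. DF x v)"
  using Ck2' by simp

lemma D2_cont: "continuous_on UNIV (\<lambda>x. D2 x v w)"
  using Ck2' by simp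

lemma D2_pos: "v \<noteq> 0 \<Longrightarrow> D2 x v v > 0"
  using pd unfolding posdef_hessian_def by blast

lemma DF_lin: "linear (DF x)"
  using F_der has_derivative_linear by blast

lemma D2_lin: "linear (D2 x v)"
  using g_der has_derivative_linear by blast

end

lemma line_deriv:
  fixes g :: "'a::real_normed_vector \<Rightarrow> real"
  assumes "(g has_derivative g') (at (a + t *\<^sub>R w))"
  shows "((\<lambda>s. g (a + s *\<^sub>R w)) has_real_derivative g' w) (at t)"
proof -
  have l: "linear g'" using assms has_derivative_linear by blast
  have "((\<lambda>s. a + s *\<^sub>R w) has_derivative (\<lambda>s. s *\<^sub>R w)) (at t)"
    by (auto intro!: derivative_eq_intros)
  from has_derivative_compose[OF this assms]
  have "((\<lambda>s. g (a + s *\<^sub>R w)) has_derivative (\<lambda>s. g' (s *\<^sub>R w))) (at t)" .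
  moreover have "(\<lambda>s. g' (s *\<^sub>R w)) = (*) (g' w)"
    using linear_scale[OF l] by (auto simp: mult.commute)
  ultimately show ?thesis unfolding has_field_derivative_def by simp
qed

context setting begin

lemma D2_nonneg: "D2 x w w \<ge> 0"
proof (cases "w = 0")
  case True
  then show ?thesis using linear_0[OF D2_lin] by simp
next
  case False
  then show ?thesis using D2_pos[of w x] by simp
qed

lemma F_line_bound:
  assumes "\<And>t. t \<in> {0..1} \<Longrightarrow> D2 (a + t *\<^sub>R (z - a)) (z - a) (z - a) \<ge> \<beta>"
  shows "F z \<ge> F a + DF a (z - a) + \<beta> / 2"
proof -
  let ?w = "z - a"
  have "(\<lambda>s. F (a + s *\<^sub>R ?w)) 1 \<ge> (\<lambda>s. F (a + s *\<^sub>R ?w)) 0 + (\<lambda>s. DF (a + s *\<^sub>R ?w) ?w) 0 + \<beta> / 2"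
  proof (rule second_order_lb)
    fix t :: real assume "t \<in> {0..1}"
    show "((\<lambda>s. F (a + s *\<^sub>R ?w)) has_real_derivative DF (a + t *\<^sub>R ?w) ?w) (at t)"
      by (rule line_deriv[OF F_der])
    show "((\<lambda>s. DF (a + s *\<^sub>R ?w) ?w) has_real_derivative D2 (a + t *\<^sub>R ?w) ?w ?w) (at t)"
      by (rule line_deriv[OF g_der])
    show "D2 (a + t *\<^sub>R ?w) ?w ?w \<ge> \<beta>" using assms \<open>t \<in> {0..1}\<close> by blast
  qed
  then show ?thesis by simp
qed

lemma F_conv: "F z \<ge> F a + DF a (z - a)"
  using F_line_bound[where \<beta>=0 and a=a and z=z] D2_nonneg by simp

lemma F_conv_comb:
  assumes "0 \<le> u" "u \<le> 1"
  shows "F (u *\<^sub>R x + (1 - u) *\<^sub>R y) \<le> u * F x + (1 - u) * F y"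
proof -
  let ?p = "u *\<^sub>R x + (1 - u) *\<^sub>R y"
  have l: "linear (DF ?p)" by (rule DF_lin)
  have 1: "F x \<ge> F ?p + DF ?p (x - ?p)" by (rule F_conv)
  have 2: "F y \<ge> F ?p + DF ?p (y - ?p)" by (rule F_conv)
  have e: "u *\<^sub>R (x - ?p) + (1 - u) *\<^sub>R (y - ?p) = 0"
    by (simp add: algebra_simps)
  have "u * DF ?p (x - ?p) + (1 - u) * DF ?p (y - ?p) = DF ?p (u *\<^sub>R (x - ?p) + (1 - u) *\<^sub>R (y - ?p))"
    by (simp only: linear_add[OF l] linear_scale[OF l] real_scaleR_def)
  also have "\<dots> = 0" by (simp only: e linear_0[OF l])
  finally have "u * DF ?p (x - ?p) + (1 - u) * DF ?p (y - ?p) = 0" .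
  moreover have "u * F x \<ge> u * (F ?p + DF ?p (x - ?p))" using 1 assms by (simp add: mult_left_mono)
  moreover have "(1 - u) * F y \<ge> (1 - u) * (F ?p + DF ?p (y - ?p))" using 2 assms by (simp add: mult_left_mono)
  ultimately show ?thesis by (simp add: algebra_simps)
qed

definition B2 :: "'d phase \<Rightarrow> 'd phase \<Rightarrow> 'd phase \<Rightarrow> real" where
  "B2 x w h = (\<Sum>i\<in>Basis. \<Sum>j\<in>Basis. (w \<bullet> i) * (h \<bullet> j) * D2 x i j)"

lemma D2_B2: "D2 x w h = B2 x w h"
proof -
  have DFs: "DF y w = (\<Sum>i\<in>Basis. (w \<bullet> i) * DF y i)" for y
  proof -
    have "DF y w = DF y (\<Sum>i\<in>Basis. (w \<bullet> i) *\<^sub>R i)" by (simp only: euclidean_representation)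
    also have "\<dots> = (\<Sum>i\<in>Basis. DF y ((w \<bullet> i) *\<^sub>R i))"
      by (rule linear_sum[OF DF_lin])
    also have "\<dots> = (\<Sum>i\<in>Basis. (w \<bullet> i) * DF y i)"
      using linear_scale[OF DF_lin] by simp
    finally show ?thesis .
  qed
  have "((\<lambda>y. \<Sum>i\<in>Basis. (w \<bullet> i) * DF y i) has_derivative (\<lambda>k. \<Sum>i\<in>Basis. (w \<bullet> i) * D2 x i k)) (at x)"
    by (rule has_derivative_sum, rule has_derivative_mult_right, rule g_der)
  moreover have "(\<lambda>y. DF y w) = (\<lambda>y. \<Sum>i\<in>Basis. (w \<bullet> i) * DF y i)"
    using DFs by (rule ext)
  ultimately have "((\<lambda>y. DF y w) has_derivative (\<lambda>k. \<Sum>i\<in>Basis. (w \<bullet> i) * D2 x i k)) (at x)"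
    by (simp only:)
  then have "D2 x w = (\<lambda>k. \<Sum>i\<in>Basis. (w \<bullet> i) * D2 x i k)"
    by (rule frechet_derivative_at[symmetric])
  then have "D2 x w h = (\<Sum>i\<in>Basis. (w \<bullet> i) * D2 x i h)" by simp
  also have "\<dots> = (\<Sum>i\<in>Basis. (w \<bullet> i) * (\<Sum>j\<in>Basis. (h \<bullet> j) * D2 x i j))"
  proof (rule sum.cong[OF refl])
    fix i :: "'d phase" assume "i \<in> Basis"
    have "D2 x i h = D2 x i (\<Sum>j\<in>Basis. (h \<bullet> j) *\<^sub>R j)" by (simp only: euclidean_representation)
    also have "\<dots> = (\<Sum>j\<in>Basis. D2 x i ((h \<bullet> j) *\<^sub>R j))"
      by (rule linear_sum[OF D2_lin])
    also have "\<dots> = (\<Sum>j\<in>Basis. (h \<bullet> j) * D2 x i j)"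
      using linear_scale[OF D2_lin] by simp
    finally show "(w \<bullet> i) * D2 x i h = (w \<bullet> i) * (\<Sum>j\<in>Basis. (h \<bullet> j) * D2 x i j)" by simp
  qed
  also have "\<dots> = B2 x w h"
    unfolding B2_def by (simp only: sum_distrib_left mult.assoc)
  finally show ?thesis .
qed

lemma B2_cont: "continuous_on S (\<lambda>p. B2 (fst p) (snd p) (snd p))"
proof -
  have c: "continuous_on S (\<lambda>p. D2 (fst p) i j)" for i j
    by (rule continuous_on_compose2[OF D2_cont[of i j] continuous_on_fst[OF continuous_on_id]]) simp
  show ?thesis unfolding B2_def
    by (intro continuous_on_sum continuous_on_mult continuous_on_inner continuous_on_snd continuous_on_id continuous_on_const c)
qed

lemma B2_scale: "B2 x (s *\<^sub>R w) (s *\<^sub>R w) = s^2 * B2 x w w"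
proof -
  have "B2 x (s *\<^sub>R w) (s *\<^sub>R w) = (\<Sum>i\<in>Basis. \<Sum>j\<in>Basis. s^2 * ((w \<bullet> i) * (w \<bullet> j) * D2 x i j))"
    unfolding B2_def by (intro sum.cong refl) (simp add: power2_eq_square)
  also have "\<dots> = s^2 * B2 x w w" unfolding B2_def by (simp only: sum_distrib_left)
  finally show ?thesis .
qed

lemma strong_hess: "\<exists>\<alpha>>0. \<forall>x\<in>D. \<forall>w. D2 x w w \<ge> \<alpha> * (norm w)^2"
proof -
  have cS: "compact (D \<times> sphere (0::'d phase) 1)" using cpt by (simp add: compact_Times)
  have ne: "D \<times> sphere (0::'d phase) 1 \<noteq> {}"
  proof -
    have "0 \<in> D" using int0 interior_subset by blast
    moreover obtain b :: "'d phase" where "b \<in> Basis" using nonempty_Basis by blast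
    then have "b \<in> sphere 0 1" by simp
    ultimately show ?thesis by blast
  qed
  obtain p0 where p0: "p0 \<in> D \<times> sphere 0 1"
    and mn: "\<And>p. p \<in> D \<times> sphere 0 1 \<Longrightarrow> B2 (fst p0) (snd p0) (snd p0) \<le> B2 (fst p) (snd p) (snd p)"
    using continuous_attains_inf[OF cS ne B2_cont] by blast
  let ?\<alpha> = "B2 (fst p0) (snd p0) (snd p0)"
  have "snd p0 \<noteq> 0" using p0 by auto
  then have apos: "?\<alpha> > 0" using D2_pos[of "snd p0" "fst p0"] D2_B2 by simp
  have "D2 x w w \<ge> ?\<alpha> * (norm w)^2" if "x \<in> D" for x w
  proof (cases "w = 0")
    case True
    then show ?thesis using linear_0[OF D2_lin] by simp
  next
    case False
    let ?u = "(1 / norm w) *\<^sub>R w"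
    have "(x, ?u) \<in> D \<times> sphere 0 1" using that False by simp
    then have "?\<alpha> \<le> B2 (fst (x, ?u)) (snd (x, ?u)) (snd (x, ?u))" by (rule mn)
    then have "?\<alpha> \<le> B2 x ?u ?u" by (simp only: fst_conv snd_conv)
    also have "B2 x ?u ?u = (1 / norm w)^2 * B2 x w w" by (rule B2_scale)
    finally have le: "?\<alpha> \<le> (1 / norm w)^2 * B2 x w w" .
    have "?\<alpha> * (norm w)^2 \<le> (1 / norm w)^2 * B2 x w w * (norm w)^2"
      using mult_right_mono[OF le, of "(norm w)^2"] by simp
    also have "\<dots> = B2 x w w" using False by (simp add: power_divide)
    finally have "?\<alpha> * (norm w)^2 \<le> B2 x w w" .
    then show ?thesis using D2_B2 by simp
  qed
  then show ?thesis using apos by blast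
qed

end

declare split_paired_All[simp del] split_paired_Ex[simp del]

lemma ray_frontier_le:
  fixes S :: "'a::euclidean_space set"
  assumes "convex S" "closed S" "0 \<in> interior S" "0 < a" "0 < b"
    and "a *\<^sub>R y \<in> S" "b *\<^sub>R y \<in> frontier S"
  shows "b \<ge> a"
proof (rule ccontr)
  assume "\<not> b \<ge> a"
  then have ba: "b < a" by simp
  have "y \<noteq> 0"
  proof
    assume "y = 0"
    then have "b *\<^sub>R y \<in> interior S" using assms by simp
    then show False using assms(7) by (simp add: frontier_def)
  qed
  have "b *\<^sub>R y \<in> open_segment 0 (a *\<^sub>R y)"
  proof -
    have "0 \<noteq> a *\<^sub>R y" using \<open>y \<noteq> 0\<close> assms by simp
    moreover have "b *\<^sub>R y = (1 - b / a) *\<^sub>R 0 + (b / a) *\<^sub>R (a *\<^sub>R y)" using assms by simp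
    moreover have "0 < b / a" "b / a < 1" using assms ba by auto
    ultimately show ?thesis unfolding in_segment by blast
  qed
  moreover have "open_segment 0 (a *\<^sub>R y) \<subseteq> interior S"
    using in_interior_closure_convex_segment[OF assms(1,3)] assms(2,6) closure_closed by blast
  ultimately have "b *\<^sub>R y \<in> interior S" by blast
  then show False using assms(7) by (simp add: frontier_def)
qed

context setting begin

lemma D_closed: "closed D" using cpt compact_imp_closed by blast
lemma D_bounded: "bounded D" using cpt compact_imp_bounded by blast
lemma zero_D: "0 \<in> D" using int0 interior_subset by blast
lemma M_sub: "M \<subseteq> D" using MD D_closed by (simp add: frontier_def closure_closed)
lemma M_compact: "compact M" using MD cpt compact_frontier by blast
lemma M_int: "q \<in> M \<Longrightarrow> q \<notin> interior D" using MD by (simp add: frontier_def)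
lemma D_cases: "p \<in> D \<Longrightarrow> p \<in> interior D \<or> p \<in> M"
  using MD D_closed by (auto simp: frontier_def closure_closed)
lemma F_M: "q \<in> M \<Longrightarrow> F q = c" using MF by blast
lemma M_F: "F q = c \<Longrightarrow> q \<in> M" using MF by blast

definition rho where "rho = (SOME r. r > 0 \<and> cball 0 r \<subseteq> D)"
lemma rho: "rho > 0" "cball 0 rho \<subseteq> D"
proof -
  obtain e where "e > 0" "ball 0 e \<subseteq> D" using int0 mem_interior by blast
  then have "e/2 > 0 \<and> cball 0 (e/2) \<subseteq> D" by auto
  then have "\<exists>r. r > 0 \<and> cball 0 r \<subseteq> D" by blast
  from someI_ex[OF this] show "rho > 0" "cball 0 rho \<subseteq> D" unfolding rho_def by auto
qed

definition Bm where "Bm = (SOME b. b > 0 \<and> (\<forall>x\<in>D. norm x \<le> b))"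
lemma Bm: "Bm > 0" "x \<in> D \<Longrightarrow> norm x \<le> Bm"
proof -
  obtain b where "b > 0" "\<forall>x\<in>D. norm x \<le> b" using D_bounded bounded_pos by blast
  then have "\<exists>b. b > 0 \<and> (\<forall>x\<in>D. norm x \<le> b)" by blast
  from someI_ex[OF this] show "Bm > 0" "x \<in> D \<Longrightarrow> norm x \<le> Bm" unfolding Bm_def by auto
qed

lemma some_nonzero: "\<exists>u::'d phase. u \<noteq> 0"
proof -
  obtain b :: "'d phase" where "b \<in> Basis" using nonempty_Basis by blast
  then show ?thesis by (metis nonzero_Basis)
qed

lemma F_int: "p \<in> interior D \<Longrightarrow> F p < c"
proof -
  assume p: "p \<in> interior D"
  obtain u :: "'d phase" where u: "u \<noteq> 0" using some_nonzero by blast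
  obtain d1 where d1: "0 < d1" "p + d1 *\<^sub>R u \<in> frontier D"
    using ray_to_frontier[OF D_bounded p u] by blast
  have u': "-u \<noteq> 0" using u by simp
  obtain d2 where d2: "0 < d2" "p + d2 *\<^sub>R (-u) \<in> frontier D"
    using ray_to_frontier[OF D_bounded p u'] by blast
  define l where "l = d2 / (d1 + d2)"
  have l: "0 \<le> l" "l \<le> 1" using d1 d2 by (auto simp: l_def)
  have r: "l * d1 - (1 - l) * d2 = 0" using d1 d2 by (simp add: l_def field_simps)
  have "l *\<^sub>R (p + d1 *\<^sub>R u) + (1 - l) *\<^sub>R (p + d2 *\<^sub>R (-u)) = p + (l * d1 - (1 - l) * d2) *\<^sub>R u"
    by (simp add: algebra_simps)
  then have e: "l *\<^sub>R (p + d1 *\<^sub>R u) + (1 - l) *\<^sub>R (p + d2 *\<^sub>R (-u)) = p" using r by simp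
  have "F p \<le> l * F (p + d1 *\<^sub>R u) + (1 - l) * F (p + d2 *\<^sub>R (-u))"
    using F_conv_comb[OF l, of "p + d1 *\<^sub>R u" "p + d2 *\<^sub>R (-u)"] e by simp
  also have "\<dots> = c" using d1(2) d2(2) MD F_M by (simp add: algebra_simps)
  finally have "F p \<le> c" .
  moreover have "F p \<noteq> c" using p M_F M_int by blast
  ultimately show ?thesis by simp
qed

lemma F_le: "p \<in> D \<Longrightarrow> F p \<le> c"
  using D_cases F_int F_M by fastforce

lemma F_out: "z \<notin> D \<Longrightarrow> F z > c"
proof -
  assume z: "z \<notin> D"
  then have "z \<noteq> 0" using zero_D by auto
  obtain d where d: "0 < d" "0 + d *\<^sub>R z \<in> frontier D" "\<And>e. 0 \<le> e \<Longrightarrow> e < d \<Longrightarrow> 0 + e *\<^sub>R z \<in> interior D"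
    using ray_to_frontier[OF D_bounded int0 \<open>z \<noteq> 0\<close>] by blast
  have "d < 1"
  proof (rule ccontr)
    assume "\<not> d < 1"
    then have "d = 1 \<or> d > 1" by auto
    then show False
    proof
      assume "d = 1" then have "z \<in> M" using d(2) MD by simp
      then show False using z M_sub by blast
    next
      assume "d > 1" then have "z \<in> interior D" using d(3)[of 1] by simp
      then show False using z interior_subset by blast
    qed
  qed
  have "F (d *\<^sub>R z + (1 - d) *\<^sub>R 0) \<le> d * F z + (1 - d) * F 0"
    using F_conv_comb[of d z 0] d \<open>d < 1\<close> by simp
  moreover have "F (d *\<^sub>R z + (1 - d) *\<^sub>R 0) = c" using d(2) MD F_M by simp
  moreover have "F 0 < c" using F_int int0 by blast
  ultimately have "c < d * F z + (1 - d) * c"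
    using \<open>d < 1\<close> by (smt (verit, best) mult_strict_left_mono)
  then have "d * c < d * F z" by (simp add: algebra_simps)
  then show ?thesis using d(1) by simp
qed

lemma F_le_D: "F z \<le> c \<Longrightarrow> z \<in> D"
  using F_out[of z] by linarith

definition grad :: "'d phase \<Rightarrow> 'd phase" where
  "grad q = (\<Sum>i\<in>Basis. DF q i *\<^sub>R i)"

lemma DF_grad: "DF q w = grad q \<bullet> w"
proof -
  have "DF q w = DF q (\<Sum>i\<in>Basis. (w \<bullet> i) *\<^sub>R i)" by (simp only: euclidean_representation)
  also have "\<dots> = (\<Sum>i\<in>Basis. DF q ((w \<bullet> i) *\<^sub>R i))"
    by (rule linear_sum[OF DF_lin])
  also have "\<dots> = (\<Sum>i\<in>Basis. (w \<bullet> i) * DF q i)"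
    using linear_scale[OF DF_lin] by simp
  also have "\<dots> = (\<Sum>i\<in>Basis. (DF q i *\<^sub>R i) \<bullet> w)"
    by (rule sum.cong[OF refl]) (simp add: inner_commute)
  also have "\<dots> = grad q \<bullet> w" unfolding grad_def by (simp only: inner_sum_left)
  finally show ?thesis .
qed

lemma grad_cont: "continuous_on S grad"
proof -
  have "continuous_on S (\<lambda>q. \<Sum>i\<in>Basis. DF q i *\<^sub>R i)"
    by (intro continuous_on_sum continuous_on_scaleR continuous_on_const
        continuous_on_subset[OF DF_cont]) auto
  then show ?thesis unfolding grad_def[abs_def] .
qed

lemma grad_nz: "q \<in> M \<Longrightarrow> grad q \<noteq> 0"
proof
  assume "q \<in> M" "grad q = 0"
  then have "\<And>w. DF q w = 0" using DF_grad by simp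
  then have "DF q = (\<lambda>_. 0)" by (rule ext)
  then show False using nz \<open>q \<in> M\<close> by blast
qed

definition alpha where "alpha = (SOME \<alpha>. \<alpha> > 0 \<and> (\<forall>x\<in>D. \<forall>w. D2 x w w \<ge> \<alpha> * (norm w)^2))"
lemma alpha: "alpha > 0" "x \<in> D \<Longrightarrow> D2 x w w \<ge> alpha * (norm w)^2"
  using someI_ex[OF strong_hess] unfolding alpha_def[symmetric] by auto

lemma F_strong:
  assumes "a \<in> D" "z \<in> D"
  shows "F z \<ge> F a + DF a (z - a) + alpha / 2 * (norm (z - a))^2"
proof -
  have "F z \<ge> F a + DF a (z - a) + (alpha * (norm (z - a))^2) / 2"
  proof (rule F_line_bound)
    fix t :: real assume t: "t \<in> {0..1}"
    have "a + t *\<^sub>R (z - a) = (1 - t) *\<^sub>R a + t *\<^sub>R z" by (simp add: algebra_simps)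
    also have "\<dots> \<in> D" using cvx assms t by (auto intro!: convexD)
    finally show "D2 (a + t *\<^sub>R (z - a)) (z - a) (z - a) \<ge> alpha * (norm (z - a))^2"
      using alpha(2) by blast
  qed
  then show ?thesis by simp
qed

lemma grad_normal:
  assumes "q \<in> M" "z \<in> D"
  shows "grad q \<bullet> (z - q) \<le> - (alpha / 2 * (norm (z - q))^2)"
proof -
  have "F z \<ge> F q + DF q (z - q) + alpha / 2 * (norm (z - q))^2"
    using F_strong assms M_sub by blast
  moreover have "F q = c" using assms F_M by blast
  moreover have "F z \<le> c" using assms F_le by blast
  ultimately show ?thesis using DF_grad by simp
qed

lemma M_ne: "M \<noteq> {}"
proof -
  obtain u :: "'d phase" where u: "u \<noteq> 0" using some_nonzero by blast
  obtain d where "0 < d" "0 + d *\<^sub>R u \<in> frontier D"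
    using ray_to_frontier[OF D_bounded int0 u] by blast
  then show ?thesis using MD by blast
qed

definition Gm where "Gm = (SOME g. g > 0 \<and> (\<forall>q\<in>M. norm (grad q) \<le> g))"
lemma Gm: "Gm > 0" "q \<in> M \<Longrightarrow> norm (grad q) \<le> Gm"
proof -
  have "compact (grad ` M)" using compact_continuous_image[OF grad_cont M_compact] .
  then obtain b where "b > 0" "\<forall>x\<in>grad ` M. norm x \<le> b" using compact_imp_bounded bounded_pos by blast
  then have "\<exists>g. g > 0 \<and> (\<forall>q\<in>M. norm (grad q) \<le> g)" by blast
  from someI_ex[OF this] show "Gm > 0" "q \<in> M \<Longrightarrow> norm (grad q) \<le> Gm" unfolding Gm_def by auto
qed

definition nrm :: "'d phase \<Rightarrow> 'd phase" where
  "nrm q = (1 / norm (grad q)) *\<^sub>R grad q"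

lemma nrm_unit: "q \<in> M \<Longrightarrow> norm (nrm q) = 1"
  using grad_nz by (simp add: nrm_def)

lemma nrm_cont: "continuous_on M nrm"
proof -
  have "continuous_on M (\<lambda>q. (1 / norm (grad q)) *\<^sub>R grad q)"
    by (intro continuous_intros grad_cont) (auto simp: grad_nz)
  then show ?thesis unfolding nrm_def[abs_def] .
qed

definition kap where "kap = alpha / (2 * Gm)"
lemma kap_pos: "kap > 0" using alpha Gm by (simp add: kap_def)

lemma nrm_strong:
  assumes "q \<in> M" "z \<in> D"
  shows "nrm q \<bullet> (z - q) \<le> - (kap * (norm (z - q))^2)"
proof -
  have g: "grad q \<bullet> (z - q) \<le> - (alpha / 2 * (norm (z - q))^2)" using grad_normal assms by blast
  have gp: "norm (grad q) > 0" using grad_nz assms by simp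
  have gl: "norm (grad q) \<le> Gm" using Gm assms by blast
  have "nrm q \<bullet> (z - q) = (grad q \<bullet> (z - q)) / norm (grad q)" by (simp add: nrm_def)
  also have "\<dots> \<le> - (alpha / 2 * (norm (z - q))^2) / norm (grad q)"
    by (rule divide_right_mono[OF g]) (use gp in simp)
  also have "\<dots> \<le> - (alpha / 2 * (norm (z - q))^2) / Gm"
  proof -
    have "alpha / 2 * (norm (z - q))^2 \<ge> 0" using alpha by simp
    then have "(alpha / 2 * (norm (z - q))^2) / Gm \<le> (alpha / 2 * (norm (z - q))^2) / norm (grad q)"
      using gp gl by (simp add: frac_le)
    then show ?thesis by simp
  qed
  also have "\<dots> = - (kap * (norm (z - q))^2)" by (simp add: kap_def)
  finally show ?thesis .
qed

lemma nrm_normal: "q \<in> M \<Longrightarrow> z \<in> D \<Longrightarrow> nrm q \<bullet> (z - q) \<le> 0"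
  using nrm_strong[of q z] kap_pos
  by (smt (verit, best) mult_nonneg_nonneg zero_le_power2)

lemma nrm_strict: "q \<in> M \<Longrightarrow> z \<in> D \<Longrightarrow> z \<noteq> q \<Longrightarrow> nrm q \<bullet> (z - q) < 0"
proof -
  assume a: "q \<in> M" "z \<in> D" "z \<noteq> q"
  then have "(norm (z - q))^2 > 0" by simp
  then have "kap * (norm (z - q))^2 > 0" using kap_pos by simp
  then show ?thesis using nrm_strong[OF a(1,2)] by simp
qed

lemma nrm_q: "q \<in> M \<Longrightarrow> nrm q \<bullet> q \<ge> rho"
proof -
  assume q: "q \<in> M"
  have "rho *\<^sub>R nrm q \<in> cball 0 rho" using rho nrm_unit[OF q] by simp
  then have "rho *\<^sub>R nrm q \<in> D" using rho by blast
  then have "nrm q \<bullet> (rho *\<^sub>R nrm q - q) \<le> 0" using nrm_normal q by blast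
  then show ?thesis using nrm_unit[OF q] by (simp add: inner_diff_right power2_norm_eq_inner[symmetric])
qed

lemma LIP:
  assumes "m \<in> M" "m' \<in> M"
  shows "2 * kap * norm (m - m') \<le> norm (nrm m - nrm m')"
proof -
  have 1: "nrm m \<bullet> (m' - m) \<le> - (kap * (norm (m' - m))^2)" using nrm_strong assms M_sub by blast
  have 2: "nrm m' \<bullet> (m - m') \<le> - (kap * (norm (m - m'))^2)" using nrm_strong assms M_sub by blast
  have "2 * kap * (norm (m - m'))^2 \<le> (nrm m - nrm m') \<bullet> (m - m')"
    using 1 2 by (simp add: inner_diff_left inner_diff_right norm_minus_commute inner_commute algebra_simps)
  also have "\<dots> \<le> norm (nrm m - nrm m') * norm (m - m')" by (rule norm_cauchy_schwarz)
  finally have "2 * kap * norm (m - m') * norm (m - m') \<le> norm (nrm m - nrm m') * norm (m - m')"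
    by (simp add: power2_eq_square mult.assoc)
  then show ?thesis
    by (cases "m = m'") (auto simp: mult_le_cancel_right)
qed

end

lemma TS_sub:
  fixes Q S :: "'a::euclidean_space set"
  assumes "Q \<subseteq> S" "\<forall>z\<in>S. \<nu> \<bullet> (z - q) \<le> 0" "v \<in> tangent_space Q q"
  shows "\<nu> \<bullet> v = 0"
proof -
  obtain \<gamma> e where e: "e > 0" "\<gamma> 0 = q" "\<forall>t\<in>{-e<..<e}. \<gamma> t \<in> Q"
    and d: "(\<gamma> has_vector_derivative v) (at 0)"
    using assms(3) unfolding tangent_space_def by blast
  have "(\<gamma> has_derivative (\<lambda>t. t *\<^sub>R v)) (at 0)" using d by (simp add: has_vector_derivative_def)
  then have "((\<lambda>t. \<nu> \<bullet> \<gamma> t) has_derivative (\<lambda>t. \<nu> \<bullet> (t *\<^sub>R v))) (at 0)"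
    by (rule has_derivative_inner_right)
  moreover have "(\<lambda>t. \<nu> \<bullet> (t *\<^sub>R v)) = (*) (\<nu> \<bullet> v)" by (auto simp: mult.commute)
  ultimately have D: "((\<lambda>t. \<nu> \<bullet> \<gamma> t) has_real_derivative (\<nu> \<bullet> v)) (at 0)"
    unfolding has_field_derivative_def by simp
  show ?thesis
  proof (rule DERIV_local_max[OF D e(1)], intro allI impI)
    fix y :: real assume "\<bar>0 - y\<bar> < e"
    then have "y \<in> {-e<..<e}" by (auto simp: abs_less_iff)
    then have "\<gamma> y \<in> S" using e assms(1) by blast
    then have "\<nu> \<bullet> (\<gamma> y - q) \<le> 0" using assms(2) by blast
    then show "\<nu> \<bullet> \<gamma> y \<le> \<nu> \<bullet> \<gamma> 0" using e(2) by (simp add: inner_diff_right)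
  qed
qed

lemma deriv_from_eps:
  fixes \<gamma> :: "real \<Rightarrow> 'a::real_normed_vector"
  assumes "\<gamma> 0 = q" "\<And>\<epsilon>. \<epsilon> > 0 \<Longrightarrow> \<exists>d>0. \<forall>t. \<bar>t\<bar> < d \<longrightarrow> norm (\<gamma> t - q - t *\<^sub>R v) \<le> \<epsilon> * \<bar>t\<bar>"
  shows "(\<gamma> has_vector_derivative v) (at 0)"
  unfolding has_vector_derivative_def has_derivative_at_alt
proof (intro conjI allI impI)
  show "bounded_linear (\<lambda>t. t *\<^sub>R v)" by (rule bounded_linear_scaleR_left)
  fix e :: real assume "e > 0"
  then obtain d where "d > 0" "\<forall>t. \<bar>t\<bar> < d \<longrightarrow> norm (\<gamma> t - q - t *\<^sub>R v) \<le> e * \<bar>t\<bar>" using assms(2) by blast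
  then show "\<exists>d>0. \<forall>y. norm (y - 0) < d \<longrightarrow> norm (\<gamma> y - \<gamma> 0 - (y - 0) *\<^sub>R v) \<le> e * norm (y - 0)"
    using assms(1) by auto
qed

lemma eps_from_deriv:
  fixes \<gamma> :: "real \<Rightarrow> 'a::real_normed_vector"
  assumes "(\<gamma> has_vector_derivative v) (at 0)" "\<epsilon> > 0"
  shows "\<exists>d>0. \<forall>t. \<bar>t\<bar> < d \<longrightarrow> norm (\<gamma> t - \<gamma> 0 - t *\<^sub>R v) \<le> \<epsilon> * \<bar>t\<bar>"
  using assms unfolding has_vector_derivative_def has_derivative_at_alt by auto

lemma TS_sup:
  fixes S :: "'a::euclidean_space set"
  assumes cvS: "convex S" and cpS: "compact S" and rp: "\<rho> > 0" and bS: "cball 0 \<rho> \<subseteq> S"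
    and qf: "q \<in> frontier S" and sup: "\<forall>z\<in>S. \<nu> \<bullet> z \<le> \<nu> \<bullet> q" and nn: "\<nu> \<noteq> 0" and ov: "\<nu> \<bullet> v = 0"
    and near: "\<And>\<epsilon>. \<epsilon> > 0 \<Longrightarrow> \<exists>d>0. \<forall>t. 0 < \<bar>t\<bar> \<and> \<bar>t\<bar> < d \<longrightarrow> (\<exists>z\<in>S. norm (z - (q + t *\<^sub>R v)) \<le> \<epsilon> * \<bar>t\<bar>)"
  shows "v \<in> tangent_space (frontier S) q"
proof -
  have clS: "closed S" using cpS compact_imp_closed by blast
  have bdS: "bounded S" using cpS compact_imp_bounded by blast
  have i0: "0 \<in> interior S"
  proof -
    have "ball 0 \<rho> \<subseteq> S" using bS by auto
    then show ?thesis using rp by (meson centre_in_ball interior_maximal open_ball subsetD)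
  qed
  have fS: "frontier S \<subseteq> S" using clS by (simp add: frontier_subset_closed)
  have qS: "q \<in> S" using qf fS by blast
  have "(\<rho> / norm \<nu>) *\<^sub>R \<nu> \<in> cball 0 \<rho>" using rp nn by simp
  then have "\<nu> \<bullet> ((\<rho> / norm \<nu>) *\<^sub>R \<nu>) \<le> \<nu> \<bullet> q" using sup bS by blast
  then have "\<rho> * norm \<nu> \<le> \<nu> \<bullet> q" using nn by (simp add: power2_norm_eq_inner[symmetric] power2_eq_square)
  then have nq: "\<nu> \<bullet> q > 0" using rp nn by (smt (verit) mult_pos_pos zero_less_norm_iff)
  then have q0: "q \<noteq> 0" by auto
  define e0 where "e0 = norm q / (norm v + 1)"
  have nv1: "norm v + 1 > 0" using norm_ge_zero[of v] by linarith
  then have e0: "e0 > 0" using q0 unfolding e0_def by (intro divide_pos_pos) auto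
  have ynz: "q + t *\<^sub>R v \<noteq> 0" if "\<bar>t\<bar> < e0" for t
  proof
    assume "q + t *\<^sub>R v = 0"
    then have "norm q = \<bar>t\<bar> * norm v" by (metis add_eq_0_iff norm_minus_cancel norm_scaleR)
    also have "\<dots> \<le> \<bar>t\<bar> * (norm v + 1)" by (simp add: mult_left_mono)
    also have "\<dots> < e0 * (norm v + 1)" using that nv1 by (simp add: mult_strict_right_mono)
    also have "\<dots> = norm q" using nv1 by (simp add: e0_def)
    finally show False by simp
  qed
  define \<sigma> where "\<sigma> t = (SOME s. s > 0 \<and> s *\<^sub>R (q + t *\<^sub>R v) \<in> frontier S)" for t
  have \<sigma>: "\<sigma> t > 0 \<and> \<sigma> t *\<^sub>R (q + t *\<^sub>R v) \<in> frontier S" if tt: "\<bar>t\<bar> < e0" for t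
  proof -
    obtain d where "0 < d" "0 + d *\<^sub>R (q + t *\<^sub>R v) \<in> frontier S"
      using ray_to_frontier[OF bdS i0 ynz[OF tt]] by blast
    then have "\<exists>s. s > 0 \<and> s *\<^sub>R (q + t *\<^sub>R v) \<in> frontier S" by auto
    from someI_ex[OF this] show ?thesis unfolding \<sigma>_def .
  qed
  have \<sigma>le: "\<sigma> t \<le> 1" if "\<bar>t\<bar> < e0" for t
  proof -
    have "\<sigma> t *\<^sub>R (q + t *\<^sub>R v) \<in> S" using \<sigma>[OF that] fS by blast
    then have "\<nu> \<bullet> (\<sigma> t *\<^sub>R (q + t *\<^sub>R v)) \<le> \<nu> \<bullet> q" using sup by blast
    then have "\<sigma> t * (\<nu> \<bullet> q) \<le> 1 * (\<nu> \<bullet> q)" using ov by (simp add: inner_add_right)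
    then show ?thesis using nq by (simp add: mult_le_cancel_right)
  qed
  have \<sigma>0: "\<sigma> 0 = 1"
  proof -
    have "1 \<le> \<sigma> 0"
      using ray_frontier_le[OF cvS clS i0, of 1 "\<sigma> 0" q] \<sigma>[of 0] e0 qS by simp
    then show ?thesis using \<sigma>le[of 0] e0 by simp
  qed
  define \<gamma> where "\<gamma> t = \<sigma> t *\<^sub>R (q + t *\<^sub>R v)" for t
  have g0: "\<gamma> 0 = q" by (simp add: \<gamma>_def \<sigma>0)
  have gin: "\<forall>t\<in>{-e0<..<e0}. \<gamma> t \<in> frontier S"
    using \<sigma> by (auto simp: \<gamma>_def abs_less_iff)
  have "(\<gamma> has_vector_derivative v) (at 0)"
  proof (rule deriv_from_eps[where \<gamma>=\<gamma> and q=q, OF g0])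
    fix \<epsilon> :: real assume ep: "\<epsilon> > 0"
    define K where "K = norm q + norm v + 1"
    have K: "K > 0" unfolding K_def using norm_ge_zero[of q] norm_ge_zero[of v] by linarith
    define \<epsilon>' where "\<epsilon>' = \<epsilon> * \<rho> / K"
    have ep': "\<epsilon>' > 0" using ep rp K by (simp add: \<epsilon>'_def)
    obtain d where d: "d > 0" "\<forall>t. 0 < \<bar>t\<bar> \<and> \<bar>t\<bar> < d \<longrightarrow> (\<exists>z\<in>S. norm (z - (q + t *\<^sub>R v)) \<le> \<epsilon>' * \<bar>t\<bar>)"
      using near[OF ep'] by blast
    define d' where "d' = min d (min e0 1)"
    have d': "d' > 0" using d e0 by (simp add: d'_def)
    have "norm (\<gamma> t - q - t *\<^sub>R v) \<le> \<epsilon> * \<bar>t\<bar>" if t: "\<bar>t\<bar> < d'" for t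
    proof (cases "t = 0")
      case True then show ?thesis using g0 by simp
    next
      case False
      let ?y = "q + t *\<^sub>R v"
      have te0: "\<bar>t\<bar> < e0" using t by (simp add: d'_def)
      obtain z where z: "z \<in> S" "norm (z - ?y) \<le> \<epsilon>' * \<bar>t\<bar>"
        using d(2) t False by (auto simp: d'_def)
      define \<theta> where "\<theta> = \<epsilon>' * \<bar>t\<bar> / \<rho>"
      have th: "\<theta> > 0" using ep' False rp by (simp add: \<theta>_def)
      have w1: "(1 / \<theta>) *\<^sub>R (?y - z) \<in> S"
      proof -
        have "norm ((1 / \<theta>) *\<^sub>R (?y - z)) = norm (z - ?y) / \<theta>" using th by (simp add: norm_minus_commute)
        also have "\<dots> \<le> (\<epsilon>' * \<bar>t\<bar>) / \<theta>" using z th by (simp add: divide_right_mono)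
        also have "\<dots> = \<rho>" using th rp ep' False by (simp add: \<theta>_def)
        finally show ?thesis using bS by auto
      qed
      have "(1 / (1 + \<theta>)) *\<^sub>R ?y = (1 - \<theta> / (1 + \<theta>)) *\<^sub>R z + (\<theta> / (1 + \<theta>)) *\<^sub>R ((1 / \<theta>) *\<^sub>R (?y - z))"
      proof -
        have e1: "(1 - \<theta> / (1 + \<theta>)) = 1 / (1 + \<theta>)" using th by (simp add: field_simps)
        have e2: "(\<theta> / (1 + \<theta>)) *\<^sub>R ((1 / \<theta>) *\<^sub>R (?y - z)) = (1 / (1 + \<theta>)) *\<^sub>R (?y - z)"
          using th by simp
        have "(1 - \<theta> / (1 + \<theta>)) *\<^sub>R z + (\<theta> / (1 + \<theta>)) *\<^sub>R ((1 / \<theta>) *\<^sub>R (?y - z))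
            = (1 / (1 + \<theta>)) *\<^sub>R z + (1 / (1 + \<theta>)) *\<^sub>R (?y - z)" by (simp only: e1 e2)
        also have "\<dots> = (1 / (1 + \<theta>)) *\<^sub>R ?y" by (simp only: scaleR_diff_right) simp
        finally show ?thesis by simp
      qed
      also have "\<dots> \<in> S"
        using convexD[OF cvS z(1) w1, of "1 - \<theta> / (1 + \<theta>)" "\<theta> / (1 + \<theta>)"] th by simp
      finally have yS: "(1 / (1 + \<theta>)) *\<^sub>R ?y \<in> S" .
      have "1 / (1 + \<theta>) \<le> \<sigma> t"
        using ray_frontier_le[OF cvS clS i0, of "1 / (1 + \<theta>)" "\<sigma> t" ?y] yS \<sigma>[OF te0] th by simp
      moreover have "1 - 1 / (1 + \<theta>) = \<theta> / (1 + \<theta>)" using th by (simp add: field_simps)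
      moreover have "\<theta> / (1 + \<theta>) \<le> \<theta>"
      proof -
        have "\<theta> \<le> \<theta> * (1 + \<theta>)" using th by (simp add: algebra_simps)
        then show ?thesis using th by (simp add: pos_divide_le_eq)
      qed
      ultimately have s1: "1 - \<sigma> t \<le> \<theta>" by linarith
      have s2: "0 \<le> 1 - \<sigma> t" using \<sigma>le[OF te0] by simp
      have "\<gamma> t - q - t *\<^sub>R v = (\<sigma> t - 1) *\<^sub>R ?y" by (simp add: \<gamma>_def algebra_simps)
      then have "norm (\<gamma> t - q - t *\<^sub>R v) = (1 - \<sigma> t) * norm ?y" using s2 by simp
      also have "\<dots> \<le> \<theta> * K"
      proof (rule mult_mono[OF s1])
        have "norm ?y \<le> norm q + \<bar>t\<bar> * norm v" by (metis norm_scaleR norm_triangle_ineq)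
        also have "\<dots> \<le> norm q + 1 * norm v" using t by (intro add_left_mono mult_right_mono) (auto simp: d'_def)
        finally show "norm ?y \<le> K" by (simp add: K_def)
      qed (use th in auto)
      also have "\<dots> = \<epsilon> * \<bar>t\<bar>" using K rp by (simp add: \<theta>_def \<epsilon>'_def)
      finally show ?thesis .
    qed
    then show "\<exists>d>0. \<forall>t. \<bar>t\<bar> < d \<longrightarrow> norm (\<gamma> t - q - t *\<^sub>R v) \<le> \<epsilon> * \<bar>t\<bar>" using d' by blast
  qed
  then show ?thesis unfolding tangent_space_def using e0 g0 gin by blast
qed

lemma orth_lemma:
  fixes \<nu> w :: "'a::real_inner"
  assumes "\<nu> \<noteq> 0" "\<And>v. \<nu> \<bullet> v = 0 \<Longrightarrow> w \<bullet> v = 0"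
  shows "w = ((w \<bullet> \<nu>) / (\<nu> \<bullet> \<nu>)) *\<^sub>R \<nu>"
proof -
  let ?v = "w - ((w \<bullet> \<nu>) / (\<nu> \<bullet> \<nu>)) *\<^sub>R \<nu>"
  have nn: "\<nu> \<bullet> \<nu> \<noteq> 0" using assms by simp
  have "\<nu> \<bullet> ?v = 0" using nn by (simp add: inner_diff_right inner_commute)
  then have "w \<bullet> ?v = 0" using assms by blast
  moreover have "\<nu> \<bullet> ?v = 0" by fact
  ultimately have "?v \<bullet> ?v = 0" by (simp add: inner_diff_left)
  then show ?thesis by simp
qed

lemma cJ_simps:
  fixes u v :: "'d::finite phase"
  shows "cJ (cJ u) = - u" "cJ u \<bullet> cJ v = u \<bullet> v" "cJ u \<bullet> u = 0" "u \<bullet> cJ u = 0"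
    "cJ u \<bullet> v = - (u \<bullet> cJ v)" "norm (cJ u) = norm u" "cJ (a *\<^sub>R u) = a *\<^sub>R cJ u"
    "cJ (u + v) = cJ u + cJ v" "cJ (u - v) = cJ u - cJ v" "cJ (- u) = - cJ u" "cJ 0 = 0"
  by (auto simp: cJ_def inner_prod_def norm_prod_def inner_commute prod_eq_iff)

lemma reeb_eq:
  fixes Q :: "'d::finite phase set"
  assumes ts: "tangent_space Q q = {v. \<nu> \<bullet> v = 0}" and nn: "\<nu> \<noteq> 0" and k: "\<nu> \<bullet> q \<noteq> 0"
  shows "reeb Q q = (1 / (\<nu> \<bullet> q)) *\<^sub>R cJ \<nu>"
  unfolding reeb_def
proof (rule the_equality)
  show "(\<forall>v\<in>tangent_space Q q. symp v ((1 / (\<nu> \<bullet> q)) *\<^sub>R cJ \<nu>) = 0) \<and> symp q ((1 / (\<nu> \<bullet> q)) *\<^sub>R cJ \<nu>) = 1"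
    using ts k by (auto simp: symp_def cJ_simps inner_commute)
next
  fix r assume r: "(\<forall>v\<in>tangent_space Q q. symp v r = 0) \<and> symp q r = 1"
  have "\<And>v. \<nu> \<bullet> v = 0 \<Longrightarrow> cJ r \<bullet> v = 0"
  proof -
    fix v assume "\<nu> \<bullet> v = 0"
    then have "cJ v \<bullet> r = 0" using r ts by (auto simp: symp_def)
    then show "cJ r \<bullet> v = 0" using cJ_simps(5)[of r v] inner_commute[of r "cJ v"] by simp
  qed
  then have e: "cJ r = ((cJ r \<bullet> \<nu>) / (\<nu> \<bullet> \<nu>)) *\<^sub>R \<nu>" by (rule orth_lemma[OF nn])
  define l where "l = (cJ r \<bullet> \<nu>) / (\<nu> \<bullet> \<nu>)"
  have rr: "r = - l *\<^sub>R cJ \<nu>"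
  proof -
    have "r = - cJ (cJ r)" by (simp add: cJ_simps)
    also have "\<dots> = - l *\<^sub>R cJ \<nu>" using e by (simp add: l_def cJ_simps)
    finally show ?thesis .
  qed
  have "1 = cJ q \<bullet> r" using r by (simp add: symp_def)
  also have "\<dots> = - l * (q \<bullet> \<nu>)" using rr by (simp add: cJ_simps)
  finally have "l = - 1 / (\<nu> \<bullet> q)" using k by (simp add: inner_commute field_simps)
  then show "r = (1 / (\<nu> \<bullet> q)) *\<^sub>R cJ \<nu>" using rr by simp
qed

context setting begin

lemma grad_nrm: "q \<in> M \<Longrightarrow> grad q = norm (grad q) *\<^sub>R nrm q"
  using grad_nz by (simp add: nrm_def)

lemma TS_M: assumes q: "q \<in> M" shows "tangent_space M q = {v. nrm q \<bullet> v = 0}"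
proof
  show "tangent_space M q \<subseteq> {v. nrm q \<bullet> v = 0}"
    using TS_sub[OF M_sub, of "nrm q" q] nrm_normal[OF q] by blast
next
  show "{v. nrm q \<bullet> v = 0} \<subseteq> tangent_space M q"
  proof
    fix v assume "v \<in> {v. nrm q \<bullet> v = 0}"
    then have ov: "nrm q \<bullet> v = 0" by simp
    have gv: "grad q \<bullet> v = 0" using grad_nrm[OF q] ov by (metis inner_scaleR_left mult_zero_right)
    define Gq where "Gq = grad q \<bullet> q"
    have Gq: "Gq > 0"
    proof -
      have "Gq = norm (grad q) * (nrm q \<bullet> q)" using grad_nrm[OF q] by (metis Gq_def inner_scaleR_left)
      moreover have "norm (grad q) > 0" using grad_nz[OF q] by simp
      moreover have "nrm q \<bullet> q > 0" using nrm_q[OF q] rho by linarith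
      ultimately show ?thesis by simp
    qed
    have sup: "\<forall>z\<in>D. nrm q \<bullet> z \<le> nrm q \<bullet> q" using nrm_normal[OF q] by (simp add: inner_diff_right)
    have nn: "nrm q \<noteq> 0" using nrm_unit[OF q] by auto
    have "v \<in> tangent_space (frontier D) q"
    proof (rule TS_sup[OF cvx cpt rho(1) rho(2) _ sup nn ov])
      show "q \<in> frontier D" using q MD by simp
      fix \<epsilon> :: real assume ep: "\<epsilon> > 0"
      define \<delta> where "\<delta> = \<epsilon> / (norm q + 1)"
      have nq1: "norm q + 1 > 0" using norm_ge_zero[of q] by linarith
      then have dl: "\<delta> > 0" using ep unfolding \<delta>_def by (intro divide_pos_pos) auto
      define A where "A = norm v + \<delta> * norm q"
      have A: "A \<ge> 0" using dl by (simp add: A_def)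
      define \<eta> where "\<eta> = \<delta> * Gq / (A + 1)"
      have eta: "\<eta> > 0" using dl Gq A by (simp add: \<eta>_def)
      obtain d1 where d1: "d1 > 0" "\<forall>y. norm (y - q) < d1 \<longrightarrow> norm (F y - F q - DF q (y - q)) \<le> \<eta> * norm (y - q)"
        using F_der[of q] eta unfolding has_derivative_at_alt by blast
      define d where "d = d1 / (A + 1)"
      have d: "d > 0" using d1 A by (simp add: d_def)
      have "\<exists>z\<in>D. norm (z - (q + t *\<^sub>R v)) \<le> \<epsilon> * \<bar>t\<bar>" if t: "0 < \<bar>t\<bar>" "\<bar>t\<bar> < d" for t
      proof -
        define w where "w = t *\<^sub>R v - (\<delta> * \<bar>t\<bar>) *\<^sub>R q"
        have nw: "norm w \<le> \<bar>t\<bar> * A"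
        proof -
          have "norm w \<le> norm (t *\<^sub>R v) + norm ((\<delta> * \<bar>t\<bar>) *\<^sub>R q)" unfolding w_def by (rule norm_triangle_ineq4)
          also have "\<dots> = \<bar>t\<bar> * A" using dl by (simp add: A_def algebra_simps)
          finally show ?thesis .
        qed
        have "\<bar>t\<bar> * A < d1"
        proof -
          have "\<bar>t\<bar> * A \<le> \<bar>t\<bar> * (A + 1)" by (simp add: mult_left_mono)
          also have "\<dots> < d * (A + 1)" using t A by (simp add: mult_strict_right_mono)
          also have "\<dots> = d1" using A by (simp add: d_def)
          finally show ?thesis .
        qed
        then have "norm ((q + w) - q) < d1" using nw by simp
        then have Fb: "norm (F (q + w) - F q - DF q w) \<le> \<eta> * norm w" using d1(2) by fastforce
        have DFw: "DF q w = - (\<delta> * \<bar>t\<bar>) * Gq"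
          by (simp add: DF_grad w_def inner_diff_right gv Gq_def)
        have "F (q + w) \<le> c - \<delta> * \<bar>t\<bar> * Gq + \<eta> * norm w"
          using Fb DFw F_M[OF q] by (simp add: abs_le_iff)
        also have "\<eta> * norm w \<le> \<eta> * (\<bar>t\<bar> * A)" using nw eta by (simp add: mult_left_mono)
        also have "\<eta> * (\<bar>t\<bar> * A) < \<delta> * \<bar>t\<bar> * Gq"
        proof -
          have "\<eta> * A < \<delta> * Gq"
          proof -
            have "\<eta> * A = \<delta> * Gq * (A / (A + 1))" by (simp add: \<eta>_def)
            also have "\<dots> < \<delta> * Gq * 1" using dl Gq A by (intro mult_strict_left_mono) auto
            finally show ?thesis by simp
          qed
          then have "\<bar>t\<bar> * (\<eta> * A) < \<bar>t\<bar> * (\<delta> * Gq)" using t by simp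
          then show ?thesis by (simp add: algebra_simps)
        qed
        finally have "F (q + w) < c" by simp
        then have "q + w \<in> D" using F_le_D by simp
        moreover have "norm ((q + w) - (q + t *\<^sub>R v)) \<le> \<epsilon> * \<bar>t\<bar>"
        proof -
          have "norm ((q + w) - (q + t *\<^sub>R v)) = \<delta> * \<bar>t\<bar> * norm q" using dl by (simp add: w_def)
          also have "\<dots> \<le> \<epsilon> * \<bar>t\<bar>"
          proof -
            have "\<delta> * norm q = \<epsilon> * norm q / (norm q + 1)" by (simp add: \<delta>_def)
            also have "\<dots> \<le> \<epsilon>" using nq1 ep by (simp add: pos_divide_le_eq)
            finally have "\<delta> * norm q \<le> \<epsilon>" .
            then show ?thesis by (metis abs_ge_zero mult.commute mult.left_commute mult_left_mono)
          qed
          finally show ?thesis .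
        qed
        ultimately show ?thesis by blast
      qed
      then show "\<exists>d>0. \<forall>t. 0 < \<bar>t\<bar> \<and> \<bar>t\<bar> < d \<longrightarrow> (\<exists>z\<in>D. norm (z - (q + t *\<^sub>R v)) \<le> \<epsilon> * \<bar>t\<bar>)"
        using d by blast
    qed
    then show "v \<in> tangent_space M q" using MD by simp
  qed
qed

definition Rb where "Rb q = (1 / (nrm q \<bullet> q)) *\<^sub>R cJ (nrm q)"

lemma reeb_M: "q \<in> M \<Longrightarrow> reeb M q = Rb q"
proof -
  assume q: "q \<in> M"
  have "nrm q \<noteq> 0" using nrm_unit[OF q] by auto
  moreover have "nrm q \<bullet> q \<noteq> 0" using nrm_q[OF q] rho by linarith
  ultimately show ?thesis using reeb_eq[OF TS_M[OF q]] by (simp add: Rb_def)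
qed

end

lemma max_not_interior:
  fixes S :: "'a::euclidean_space set"
  assumes "y \<noteq> 0" "\<forall>z\<in>S. y \<bullet> z \<le> y \<bullet> a"
  shows "a \<notin> interior S"
proof
  assume "a \<in> interior S"
  then obtain e where e: "e > 0" "ball a e \<subseteq> S" using mem_interior by blast
  let ?z = "a + (e / 2 / norm y) *\<^sub>R y"
  have "dist a ?z < e" using e assms(1) by (simp add: dist_norm)
  then have "?z \<in> S" using e by auto
  then have "y \<bullet> ?z \<le> y \<bullet> a" using assms by blast
  moreover have "y \<bullet> ?z = y \<bullet> a + e / 2 * norm y"
    using assms(1) by (simp add: inner_add_right power2_norm_eq_inner[symmetric] power2_eq_square)
  moreover have "e / 2 * norm y > 0" using e assms(1) by simp
  ultimately show False by linarith
qed

context setting begin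

lemma NU:
  assumes p: "p \<in> M" and nv: "\<forall>z\<in>D. \<nu> \<bullet> (z - p) \<le> 0"
  shows "\<nu> = (\<nu> \<bullet> nrm p) *\<^sub>R nrm p" "\<nu> \<bullet> nrm p \<ge> 0"
proof -
  have nn: "nrm p \<noteq> 0" and n1: "nrm p \<bullet> nrm p = 1"
    using nrm_unit[OF p] by (auto simp: power2_norm_eq_inner[symmetric])
  have "\<And>v. nrm p \<bullet> v = 0 \<Longrightarrow> \<nu> \<bullet> v = 0"
  proof -
    fix v assume "nrm p \<bullet> v = 0"
    then have "v \<in> tangent_space M p" using TS_M[OF p] by simp
    then show "\<nu> \<bullet> v = 0" using TS_sub[OF M_sub nv] by blast
  qed
  from orth_lemma[OF nn this] show e: "\<nu> = (\<nu> \<bullet> nrm p) *\<^sub>R nrm p" using n1 by simp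
  have "\<nu> \<bullet> (0 - p) \<le> 0" using nv zero_D by blast
  then have "\<nu> \<bullet> p \<ge> 0" by simp
  moreover have "\<nu> \<bullet> p = (\<nu> \<bullet> nrm p) * (nrm p \<bullet> p)" by (subst e) simp
  moreover have "nrm p \<bullet> p > 0" using nrm_q[OF p] rho by linarith
  ultimately show "\<nu> \<bullet> nrm p \<ge> 0" by (simp add: zero_le_mult_iff)
qed

lemma max_M:
  assumes "a \<in> D" "u \<noteq> 0" "\<forall>z\<in>D. u \<bullet> z \<le> u \<bullet> a"
  shows "a \<in> M" "nrm a = (1 / norm u) *\<^sub>R u"
proof -
  show a: "a \<in> M" using D_cases[OF assms(1)] max_not_interior[OF assms(2,3)] by blast
  have nv: "\<forall>z\<in>D. u \<bullet> (z - a) \<le> 0" using assms(3) by (simp add: inner_diff_right)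
  have e: "u = (u \<bullet> nrm a) *\<^sub>R nrm a" and s: "u \<bullet> nrm a \<ge> 0" using NU[OF a nv] by auto
  have "norm u = \<bar>u \<bullet> nrm a\<bar> * norm (nrm a)" by (subst e) simp
  then have "norm u = u \<bullet> nrm a" using s nrm_unit[OF a] by simp
  then have "u = norm u *\<^sub>R nrm a" using e by simp
  then have "(1 / norm u) *\<^sub>R u = (1 / norm u) *\<^sub>R (norm u *\<^sub>R nrm a)" by simp
  also have "\<dots> = nrm a" using assms(2) by simp
  finally show "nrm a = (1 / norm u) *\<^sub>R u" by simp
qed

definition pt :: "'d phase \<Rightarrow> 'd phase" where
  "pt u = (SOME a. a \<in> D \<and> (\<forall>z\<in>D. u \<bullet> z \<le> u \<bullet> a))"

lemma pt: "pt u \<in> D" "\<And>z. z \<in> D \<Longrightarrow> u \<bullet> z \<le> u \<bullet> pt u"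
proof -
  have "\<exists>a\<in>D. \<forall>z\<in>D. u \<bullet> (z::'d phase) \<le> u \<bullet> a"
    using continuous_attains_sup[OF cpt _ continuous_on_inner[OF continuous_on_const continuous_on_id]] zero_D
    by blast
  then have "\<exists>a. a \<in> D \<and> (\<forall>z\<in>D. u \<bullet> (z::'d phase) \<le> u \<bullet> a)" by blast
  from someI_ex[OF this] show "pt u \<in> D" "\<And>z. z \<in> D \<Longrightarrow> u \<bullet> z \<le> u \<bullet> pt u"
    unfolding pt_def by auto
qed

lemma pt_M: "u \<noteq> 0 \<Longrightarrow> pt u \<in> M" and pt_nrm: "u \<noteq> 0 \<Longrightarrow> nrm (pt u) = (1 / norm u) *\<^sub>R u"
  using max_M[OF pt(1) _ ] pt(2) by auto

lemma LIP': "m \<in> M \<Longrightarrow> m' \<in> M \<Longrightarrow> norm (m - m') \<le> norm (nrm m - nrm m') / (2 * kap)"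
  using LIP[of m m'] kap_pos by (simp add: field_simps)

definition Pset :: "'d phase set" where
  "Pset = {a - b | a b. a \<in> D \<and> b \<in> D}"

lemma hull_M: "convex hull M = D"
  using Krein_Milman_frontier[OF cvx cpt] MD by simp

lemma sym_M: "symmetrization M = frontier Pset"
  unfolding symmetrization_def hull_M Pset_def ..

lemma Pset_compact: "compact Pset" unfolding Pset_def using compact_differences[OF cpt cpt] .
lemma Pset_closed: "closed Pset" using Pset_compact compact_imp_closed by blast
lemma Pset_convex: "convex Pset"
proof -
  have "Pset = (\<Union>x\<in>D. \<Union>y\<in>D. {x - y})" unfolding Pset_def by auto
  then show ?thesis using convex_differences[OF cvx cvx] by simp
qed
lemma Pset_ball: "cball 0 rho \<subseteq> Pset"
proof
  fix z :: "'d phase" assume "z \<in> cball 0 rho"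
  then have "z \<in> D" using rho by blast
  then have "z - 0 \<in> Pset" unfolding Pset_def using zero_D by blast
  then show "z \<in> Pset" by simp
qed
lemma Pset_int: "0 \<in> interior Pset"
proof -
  have "ball 0 rho \<subseteq> Pset" using Pset_ball by auto
  then show ?thesis using rho by (meson centre_in_ball interior_maximal open_ball subsetD)
qed
lemma fP_sub: "frontier Pset \<subseteq> Pset" using Pset_closed by (simp add: frontier_subset_closed)

lemma P_support:
  assumes "q \<in> frontier Pset"
  shows "\<exists>\<nu>. norm \<nu> = 1 \<and> (\<forall>z\<in>Pset. \<nu> \<bullet> z \<le> \<nu> \<bullet> q)"
proof -
  have ri: "rel_interior Pset = interior Pset" using Pset_int rel_interior_nonempty_interior by blast
  have "q \<in> closure Pset" "q \<notin> rel_interior Pset" using assms ri by (auto simp: frontier_def)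
  then obtain a where a: "a \<noteq> 0" "\<And>y. y \<in> closure Pset \<Longrightarrow> a \<bullet> q \<le> a \<bullet> y"
    using supporting_hyperplane_relative_frontier[OF Pset_convex] by metis
  let ?\<nu> = "(1 / norm a) *\<^sub>R (- a)"
  have "norm ?\<nu> = 1" using a by simp
  moreover have "\<forall>z\<in>Pset. ?\<nu> \<bullet> z \<le> ?\<nu> \<bullet> q"
  proof
    fix z assume "z \<in> Pset"
    then have "a \<bullet> q \<le> a \<bullet> z" using a closure_subset by blast
    then show "?\<nu> \<bullet> z \<le> ?\<nu> \<bullet> q" using a by (simp add: divide_right_mono)
  qed
  ultimately show ?thesis by blast
qed

lemma P_decomp:
  assumes "a \<in> D" "b \<in> D" "\<nu> \<noteq> 0" "\<forall>z\<in>Pset. \<nu> \<bullet> z \<le> \<nu> \<bullet> (a - b)"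
  shows "a \<in> M" "nrm a = (1 / norm \<nu>) *\<^sub>R \<nu>"
proof -
  have "\<forall>z\<in>D. \<nu> \<bullet> z \<le> \<nu> \<bullet> a"
  proof
    fix z assume "z \<in> D"
    then have "z - b \<in> Pset" unfolding Pset_def using assms by blast
    then have "\<nu> \<bullet> (z - b) \<le> \<nu> \<bullet> (a - b)" using assms by blast
    then show "\<nu> \<bullet> z \<le> \<nu> \<bullet> a" by (simp add: inner_diff_right)
  qed
  then show "a \<in> M" "nrm a = (1 / norm \<nu>) *\<^sub>R \<nu>" using max_M[OF assms(1,3)] by auto
qed

definition nuP where "nuP q = (SOME \<nu>. norm \<nu> = 1 \<and> (\<forall>z\<in>Pset. \<nu> \<bullet> z \<le> \<nu> \<bullet> q))"

lemma nuP_unique: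
  assumes "q \<in> Pset" "norm \<nu>1 = 1" "\<forall>z\<in>Pset. \<nu>1 \<bullet> z \<le> \<nu>1 \<bullet> q"
    "norm \<nu>2 = 1" "\<forall>z\<in>Pset. \<nu>2 \<bullet> z \<le> \<nu>2 \<bullet> q"
  shows "\<nu>1 = \<nu>2"
proof -
  obtain a b where ab: "q = a - b" "a \<in> D" "b \<in> D" using assms(1) unfolding Pset_def by blast
  have n1: "\<nu>1 \<noteq> 0" "\<nu>2 \<noteq> 0" using assms by auto
  have "nrm a = (1 / norm \<nu>1) *\<^sub>R \<nu>1" using P_decomp(2)[OF ab(2,3) n1(1)] assms(3) ab(1) by simp
  moreover have "nrm a = (1 / norm \<nu>2) *\<^sub>R \<nu>2" using P_decomp(2)[OF ab(2,3) n1(2)] assms(5) ab(1) by simp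
  ultimately have "nrm a = \<nu>1" "nrm a = \<nu>2" using assms(2,4) by auto
  then show ?thesis by simp
qed

lemma nuP:
  assumes "q \<in> frontier Pset"
  shows "norm (nuP q) = 1" "\<forall>z\<in>Pset. nuP q \<bullet> z \<le> nuP q \<bullet> q"
  using someI_ex[OF P_support[OF assms]] unfolding nuP_def[symmetric] by auto

lemma nuP_eq:
  assumes "q \<in> frontier Pset" "norm \<nu> = 1" "\<forall>z\<in>Pset. \<nu> \<bullet> z \<le> \<nu> \<bullet> q"
  shows "nuP q = \<nu>"
  using nuP_unique[of q "nuP q" \<nu>] nuP[OF assms(1)] assms fP_sub by blast

lemma nuP_q: "q \<in> frontier Pset \<Longrightarrow> nuP q \<bullet> q \<ge> rho"
proof -
  assume q: "q \<in> frontier Pset"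
  have "rho *\<^sub>R nuP q \<in> cball 0 rho" using rho nuP(1)[OF q] by simp
  then have "rho *\<^sub>R nuP q \<in> Pset" using Pset_ball by blast
  then have "nuP q \<bullet> (rho *\<^sub>R nuP q) \<le> nuP q \<bullet> q" using nuP(2)[OF q] by blast
  then show ?thesis using nuP(1)[OF q] by (simp add: power2_norm_eq_inner[symmetric])
qed

lemma TS_P:
  assumes q: "q \<in> frontier Pset"
  shows "tangent_space (frontier Pset) q = {v. nuP q \<bullet> v = 0}"
proof
  have nv: "\<forall>z\<in>Pset. nuP q \<bullet> (z - q) \<le> 0" using nuP(2)[OF q] by (simp add: inner_diff_right)
  show "tangent_space (frontier Pset) q \<subseteq> {v. nuP q \<bullet> v = 0}"
    using TS_sub[OF fP_sub nv] by blast
next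
  show "{v. nuP q \<bullet> v = 0} \<subseteq> tangent_space (frontier Pset) q"
  proof
    fix v assume "v \<in> {v. nuP q \<bullet> v = 0}"
    then have ov: "nuP q \<bullet> v = 0" by simp
    have nn: "nuP q \<noteq> 0" using nuP(1)[OF q] by auto
    obtain a b where ab: "q = a - b" "a \<in> D" "b \<in> D" using q fP_sub unfolding Pset_def by blast
    have aM: "a \<in> M" and na: "nrm a = nuP q"
      using P_decomp[OF ab(2,3) nn] nuP[OF q] ab(1) by auto
    have "v \<in> tangent_space M a" using TS_M[OF aM] ov na by simp
    then obtain \<alpha> e where al: "e > 0" "\<alpha> 0 = a" "\<forall>t\<in>{-e<..<e}. \<alpha> t \<in> M"
      and ad: "(\<alpha> has_vector_derivative v) (at 0)"
      unfolding tangent_space_def by blast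
    show "v \<in> tangent_space (frontier Pset) q"
    proof (rule TS_sup[OF Pset_convex Pset_compact rho(1) Pset_ball q nuP(2)[OF q] nn ov])
      fix \<epsilon> :: real assume ep: "\<epsilon> > 0"
      obtain d where d: "d > 0" "\<forall>t. \<bar>t\<bar> < d \<longrightarrow> norm (\<alpha> t - \<alpha> 0 - t *\<^sub>R v) \<le> \<epsilon> * \<bar>t\<bar>"
        using eps_from_deriv[OF ad ep] by blast
      have "\<exists>z\<in>Pset. norm (z - (q + t *\<^sub>R v)) \<le> \<epsilon> * \<bar>t\<bar>" if t: "0 < \<bar>t\<bar>" "\<bar>t\<bar> < min d e" for t
      proof -
        have "t \<in> {-e<..<e}" using t by (auto simp: abs_less_iff)
        then have "\<alpha> t \<in> D" using al M_sub by blast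
        then have "\<alpha> t - b \<in> Pset" unfolding Pset_def using ab by blast
        moreover have "\<alpha> t - b - (q + t *\<^sub>R v) = \<alpha> t - \<alpha> 0 - t *\<^sub>R v" using ab al by simp
        moreover have "norm (\<alpha> t - \<alpha> 0 - t *\<^sub>R v) \<le> \<epsilon> * \<bar>t\<bar>" using d(2) t by simp
        ultimately show ?thesis by (metis (no_types, lifting))
      qed
      then show "\<exists>d>0. \<forall>t. 0 < \<bar>t\<bar> \<and> \<bar>t\<bar> < d \<longrightarrow> (\<exists>z\<in>Pset. norm (z - (q + t *\<^sub>R v)) \<le> \<epsilon> * \<bar>t\<bar>)"
        using d(1) al(1) by (meson min_less_iff_conj)
    qed
  qed
qed

lemma reeb_P: "q \<in> frontier Pset \<Longrightarrow> reeb (frontier Pset) q = (1 / (nuP q \<bullet> q)) *\<^sub>R cJ (nuP q)"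
proof -
  assume q: "q \<in> frontier Pset"
  have "nuP q \<noteq> 0" using nuP(1)[OF q] by auto
  moreover have "nuP q \<bullet> q \<noteq> 0" using nuP_q[OF q] rho by linarith
  ultimately show ?thesis using reeb_eq[OF TS_P[OF q]] by simp
qed

definition W :: "'d phase \<Rightarrow> real" where
  "W u = u \<bullet> (pt u - pt (- u))"

lemma W_max: "a \<in> D \<Longrightarrow> b \<in> D \<Longrightarrow> u \<bullet> (a - b) \<le> W u"
proof -
  assume "a \<in> D" "b \<in> D"
  then have "u \<bullet> a \<le> u \<bullet> pt u" "(- u) \<bullet> b \<le> (- u) \<bullet> pt (- u)" using pt(2)[of a u] pt(2)[of b "- u"] by auto
  then show ?thesis by (simp add: W_def inner_diff_right)
qed

lemma W_in: "pt u - pt (- u) \<in> Pset" unfolding Pset_def using pt(1) by blast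

lemma Hfun_W: "Hfun M x = W (- cJ x)"
proof (cases "x = 0")
  case True
  then show ?thesis by (simp add: Hfun_def gauge_of_def W_def cJ_simps)
next
  case False
  define y where "y = - cJ x"
  have "norm y = norm x" by (simp add: y_def cJ_simps)
  then have ynz: "y \<noteq> 0" using False by (metis norm_eq_zero)
  have cy: "cJ y = x" by (simp add: y_def cJ_simps)
  define q0 where "q0 = pt y - pt (- y)"
  have q0P: "q0 \<in> Pset" using W_in by (simp add: q0_def)
  have Wy: "W y = y \<bullet> q0" by (simp add: W_def q0_def)
  have ymax: "\<forall>z\<in>Pset. y \<bullet> z \<le> y \<bullet> q0"
  proof
    fix z assume "z \<in> Pset"
    then obtain a b where "z = a - b" "a \<in> D" "b \<in> D" unfolding Pset_def by blast
    then show "y \<bullet> z \<le> y \<bullet> q0" using W_max[of a b y] Wy by simp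
  qed
  have q0f: "q0 \<in> frontier Pset"
    using max_not_interior[OF ynz ymax] q0P Pset_closed by (simp add: frontier_def closure_closed)
  let ?u = "(1 / norm y) *\<^sub>R y"
  have un: "norm ?u = 1" using ynz by simp
  have umax: "\<forall>z\<in>Pset. ?u \<bullet> z \<le> ?u \<bullet> q0" using ymax ynz by (simp add: divide_right_mono)
  have nu0: "nuP q0 = ?u" using nuP_eq[OF q0f un umax] .
  have Wpos: "W y > 0"
  proof -
    have "nuP q0 \<bullet> q0 \<ge> rho" using nuP_q[OF q0f] .
    then have "(y \<bullet> q0) / norm y \<ge> rho" using nu0 by simp
    then have "rho * norm y \<le> y \<bullet> q0" using ynz by (simp add: le_divide_eq)
    moreover have "rho * norm y > 0" using rho ynz by simp
    ultimately show ?thesis using Wy by linarith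
  qed
  let ?N = "symp_polar (symmetrization M)"
  have Neq: "?N = reeb (frontier Pset) ` frontier Pset" by (simp add: symp_polar_def sym_M)
  have ex: "W y > 0 \<and> (1 / W y) *\<^sub>R x \<in> ?N"
  proof -
    have "reeb (frontier Pset) q0 = (1 / (?u \<bullet> q0)) *\<^sub>R cJ ?u" using reeb_P[OF q0f] nu0 by simp
    also have "\<dots> = (1 / W y) *\<^sub>R x" using ynz by (simp add: Wy cJ_simps cy)
    finally show ?thesis using Wpos Neq q0f by (metis image_eqI)
  qed
  have un: "t = W y" if t: "t > 0 \<and> (1 / t) *\<^sub>R x \<in> ?N" for t
  proof -
    obtain q' where q': "q' \<in> frontier Pset" "(1 / t) *\<^sub>R x = reeb (frontier Pset) q'" using t Neq by auto
    define \<nu>' where "\<nu>' = nuP q'"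
    define k where "k = \<nu>' \<bullet> q'"
    have k: "k > 0" using nuP_q[OF q'(1)] rho by (simp add: k_def \<nu>'_def)
    have e: "(1 / t) *\<^sub>R x = (1 / k) *\<^sub>R cJ \<nu>'" using q' reeb_P[OF q'(1)] by (simp add: k_def \<nu>'_def)
    have "(1 / t) *\<^sub>R y = (1 / k) *\<^sub>R \<nu>'"
    proof -
      have "(1 / t) *\<^sub>R y = - cJ ((1 / t) *\<^sub>R x)" by (simp add: y_def cJ_simps)
      also have "\<dots> = (1 / k) *\<^sub>R \<nu>'" by (simp add: e cJ_simps)
      finally show ?thesis .
    qed
    then have nuy: "\<nu>' = (k / t) *\<^sub>R y"
    proof -
      assume eq: "(1 / t) *\<^sub>R y = (1 / k) *\<^sub>R \<nu>'"
      have "\<nu>' = k *\<^sub>R ((1 / k) *\<^sub>R \<nu>')" using k by simp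
      also have "\<dots> = k *\<^sub>R ((1 / t) *\<^sub>R y)" using eq by simp
      also have "\<dots> = (k / t) *\<^sub>R y" by simp
      finally show ?thesis .
    qed
    have "1 = norm \<nu>'" using nuP(1)[OF q'(1)] by (simp add: \<nu>'_def)
    also have "\<dots> = k / t * norm y" using nuy k t by simp
    finally have tk: "t = k * norm y" using t by (simp add: field_simps)
    have "k = ((k / t) *\<^sub>R y) \<bullet> q'" by (subst nuy[symmetric]) (simp add: k_def)
    then have "k = (k / t) * (y \<bullet> q')" by simp
    then have "k * t = k * (y \<bullet> q')" using t by (simp add: field_simps)
    then have "t = y \<bullet> q'" using k by simp
    moreover have "y \<bullet> q' \<le> W y"
    proof -
      obtain a b where "q' = a - b" "a \<in> D" "b \<in> D" using q'(1) fP_sub unfolding Pset_def by blast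
      then show ?thesis using W_max[of a b y] by simp
    qed
    moreover have "y \<bullet> q' \<ge> y \<bullet> q0"
    proof -
      have "\<nu>' \<bullet> q0 \<le> \<nu>' \<bullet> q'" using nuP(2)[OF q'(1)] q0P by (simp add: \<nu>'_def)
      then have "(k / t) * (y \<bullet> q0) \<le> (k / t) * (y \<bullet> q')" using nuy by simp
      moreover have "k / t > 0" using k t by simp
      ultimately show ?thesis by (meson mult_le_cancel_left_pos)
    qed
    ultimately show ?thesis using Wy by linarith
  qed
  have "gauge_of ?N x = W y"
    unfolding gauge_of_def using False the_equality[of "\<lambda>t. t > 0 \<and> (1 / t) *\<^sub>R x \<in> ?N", OF ex un] by simp
  then show ?thesis by (simp add: Hfun_def y_def)
qed

end

lemma nds: "(norm (a - b))^2 = (norm a)^2 - 2 * (a \<bullet> b) + (norm (b::'a::real_inner))^2"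
  by (simp add: power2_norm_eq_inner inner_diff_left inner_diff_right inner_commute)

context setting begin

lemma Rb_alt: "q \<in> M \<Longrightarrow> Rb q = (1 / (nrm q \<bullet> q)) *\<^sub>R cJ (nrm q)" by (simp add: Rb_def)

lemma nq_pos: "q \<in> M \<Longrightarrow> nrm q \<bullet> q > 0" using nrm_q rho by (meson less_le_trans)

lemma nq_le: "q \<in> M \<Longrightarrow> nrm q \<bullet> q \<le> Bm"
proof -
  assume q: "q \<in> M"
  have "nrm q \<bullet> q \<le> norm (nrm q) * norm q" by (rule norm_cauchy_schwarz)
  also have "\<dots> \<le> Bm" using nrm_unit[OF q] Bm(2)[of q] q M_sub by auto
  finally show ?thesis .
qed

lemma uniq:
  assumes m1: "m1 \<in> M" and m2: "m2 \<in> M" and l: "l1 > 0" "l2 > 0"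
    and e1: "m1 - x = l1 *\<^sub>R Rb m1" and e2: "m2 - x = l2 *\<^sub>R Rb m2"
  shows "m1 = m2"
proof (rule ccontr)
  assume ne: "m1 \<noteq> m2"
  define t1 where "t1 = l1 / (nrm m1 \<bullet> m1)"
  define t2 where "t2 = l2 / (nrm m2 \<bullet> m2)"
  have t: "t1 > 0" "t2 > 0" using l nq_pos m1 m2 by (auto simp: t1_def t2_def)
  have f1: "m1 - x = t1 *\<^sub>R cJ (nrm m1)" using e1 by (simp add: Rb_def t1_def)
  have f2: "m2 - x = t2 *\<^sub>R cJ (nrm m2)" using e2 by (simp add: Rb_def t2_def)
  have "m2 - m1 = (m2 - x) - (m1 - x)" by simp
  then have d: "m2 - m1 = t2 *\<^sub>R cJ (nrm m2) - t1 *\<^sub>R cJ (nrm m1)"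
    using f1 f2 by simp
  define s where "s = nrm m1 \<bullet> cJ (nrm m2)"
  have a1: "nrm m1 \<bullet> (m2 - m1) = t2 * s"
    using d by (simp add: inner_diff_right s_def cJ_simps)
  have a2: "nrm m2 \<bullet> (m1 - m2) = t1 * (nrm m2 \<bullet> cJ (nrm m1))"
  proof -
    have "m1 - m2 = - (m2 - m1)" by simp
    also have "\<dots> = t1 *\<^sub>R cJ (nrm m1) - t2 *\<^sub>R cJ (nrm m2)" using d by simp
    finally have "m1 - m2 = t1 *\<^sub>R cJ (nrm m1) - t2 *\<^sub>R cJ (nrm m2)" .
    then show ?thesis by (simp add: inner_diff_right cJ_simps)
  qed
  have sw: "nrm m2 \<bullet> cJ (nrm m1) = - s"
    using cJ_simps(5)[of "nrm m1" "nrm m2"] by (simp add: s_def inner_commute)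
  have "nrm m1 \<bullet> (m2 - m1) < 0" using nrm_strict[of m1 m2] m1 m2 M_sub ne by blast
  then have "s < 0" using a1 t by (simp add: mult_less_0_iff)
  moreover have "nrm m2 \<bullet> (m1 - m2) < 0" using nrm_strict[of m2 m1] m1 m2 M_sub ne by blast
  then have "s > 0" using a2 sw t by (simp add: zero_less_mult_iff)
  ultimately show False by simp
qed

lemma Rb_norm: "q \<in> M \<Longrightarrow> norm (Rb q) = 1 / (nrm q \<bullet> q)"
  using nq_pos[of q] nrm_unit[of q] by (simp add: Rb_def cJ_simps)

lemma cJ_cont: "continuous_on S (cJ :: 'd phase \<Rightarrow> 'd phase)"
proof -
  have "continuous_on S (\<lambda>u::'d phase. (- snd u, fst u))"
    by (intro continuous_intros)
  then show ?thesis unfolding cJ_def[abs_def] .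
qed

lemma Rb_cont: "continuous_on M Rb"
proof -
  have "continuous_on M (\<lambda>q. (1 / (nrm q \<bullet> q)) *\<^sub>R cJ (nrm q))"
    by (intro continuous_intros nrm_cont continuous_on_compose2[OF cJ_cont nrm_cont])
       (auto dest: nq_pos)
  then show ?thesis unfolding Rb_def[abs_def] .
qed

lemma Rb_perp: "q \<in> M \<Longrightarrow> nrm q \<bullet> Rb q = 0"
  by (simp add: Rb_def cJ_simps)

lemma off_D:
  assumes "q \<in> M" "y - q = l *\<^sub>R Rb q" "l \<noteq> 0"
  shows "y \<notin> D"
proof
  assume y: "y \<in> D"
  have "Rb q \<noteq> 0" using Rb_norm[OF assms(1)] nq_pos[OF assms(1)] by auto
  then have "l *\<^sub>R Rb q \<noteq> 0" using assms(3) by simp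
  then have "y \<noteq> q" using assms(2) by auto
  then have "nrm q \<bullet> (y - q) < 0" using nrm_strict assms y by blast
  moreover have "nrm q \<bullet> (y - q) = 0" using assms Rb_perp by simp
  ultimately show False by simp
qed

definition Phi :: "'d phase \<times> real \<Rightarrow> 'd phase" where
  "Phi p = fst p - snd p *\<^sub>R Rb (fst p)"

lemma Phi_cont: "continuous_on (M \<times> UNIV) Phi"
proof -
  have "continuous_on (M \<times> UNIV) (\<lambda>p. Rb (fst p))"
    by (rule continuous_on_compose2[OF Rb_cont continuous_on_fst[OF continuous_on_id]]) auto
  then have "continuous_on (M \<times> UNIV) (\<lambda>p. fst p - snd p *\<^sub>R Rb (fst p))"
    by (intro continuous_intros)
  then show ?thesis unfolding Phi_def[abs_def] .
qed

lemma closest_M: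
  assumes "p \<in> M" "r > 0"
  shows "closest_point D (p + r *\<^sub>R nrm p) = p" "p + r *\<^sub>R nrm p \<notin> D"
proof -
  let ?z = "p + r *\<^sub>R nrm p"
  have "\<forall>y\<in>D. dist ?z p \<le> dist ?z y"
  proof
    fix y assume y: "y \<in> D"
    have "nrm p \<bullet> (y - p) \<le> 0" using nrm_normal assms y by blast
    have "?z - y = (?z - p) - (y - p)" by simp
    then have "(dist ?z y)^2 = (norm ((?z - p) - (y - p)))^2" by (simp only: dist_norm)
    also have "\<dots> = (norm (?z - p))^2 - 2 * ((?z - p) \<bullet> (y - p)) + (norm (y - p))^2"
      by (rule nds)
    finally have A: "(dist ?z y)^2 = (norm (?z - p))^2 - 2 * ((?z - p) \<bullet> (y - p)) + (norm (y - p))^2" .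
    have B: "(?z - p) \<bullet> (y - p) = r * (nrm p \<bullet> (y - p))" by simp
    have C: "r * (nrm p \<bullet> (y - p)) \<le> 0" using \<open>nrm p \<bullet> (y - p) \<le> 0\<close> assms(2) by (simp add: mult_nonneg_nonpos)
    have E: "(dist ?z p)^2 = (norm (?z - p))^2" by (simp only: dist_norm)
    have F: "(norm (y - p))^2 \<ge> 0" by simp
    have "(dist ?z p)^2 \<le> (dist ?z y)^2" using A B C E F by linarith
    then show "dist ?z p \<le> dist ?z y" by (rule power2_le_imp_le) simp
  qed
  then show "closest_point D ?z = p"
  proof -
    have "p \<in> D" using assms M_sub by blast
    from closest_point_unique[OF cvx D_closed this \<open>\<forall>y\<in>D. dist ?z p \<le> dist ?z y\<close>]
    show ?thesis by simp
  qed
  show "?z \<notin> D"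
  proof
    assume "?z \<in> D"
    then have "nrm p \<bullet> (?z - p) \<le> 0" using nrm_normal assms by blast
    moreover have "nrm p \<bullet> (?z - p) = r"
    proof -
      have "nrm p \<bullet> (?z - p) = r * (nrm p \<bullet> nrm p)" by simp
      also have "nrm p \<bullet> nrm p = (norm (nrm p))^2" by (rule power2_norm_eq_inner[symmetric])
      finally show ?thesis using nrm_unit[OF assms(1)] by simp
    qed
    ultimately show False using assms by simp
  qed
qed

lemma existence:
  assumes x: "x \<notin> D"
  shows "\<exists>m\<in>M. \<exists>l>0. m - x = l *\<^sub>R Rb m"
proof -
  define Ext where "Ext = - D"
  have oE: "open Ext" using D_closed by (simp add: Ext_def open_Compl)
  define cp where "cp = closest_point D"
  have Dne: "D \<noteq> {}" using zero_D by blast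
  have cpD: "cp z \<in> D" for z using closest_point_in_set[OF D_closed Dne] by (simp add: cp_def)
  have cpdot: "(z - cp z) \<bullet> (y - cp z) \<le> 0" if "y \<in> D" for z y
    using closest_point_dot[OF cvx D_closed that] by (simp add: cp_def)
  have cpM: "cp z \<in> M" if "z \<in> Ext" for z
  proof -
    have "z - cp z \<noteq> 0" using that cpD[of z] by (auto simp: Ext_def)
    moreover have "\<forall>y\<in>D. (z - cp z) \<bullet> y \<le> (z - cp z) \<bullet> cp z"
      using cpdot by (simp add: inner_diff_right)
    ultimately have "cp z \<notin> interior D" by (rule max_not_interior)
    then show ?thesis using D_cases cpD by blast
  qed
  have cpn: "z - cp z = norm (z - cp z) *\<^sub>R nrm (cp z)" if "z \<in> Ext" for z
  proof -
    have nv: "\<forall>y\<in>D. (z - cp z) \<bullet> (y - cp z) \<le> 0" using cpdot by blast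
    have e: "z - cp z = ((z - cp z) \<bullet> nrm (cp z)) *\<^sub>R nrm (cp z)"
      and s: "(z - cp z) \<bullet> nrm (cp z) \<ge> 0" using NU[OF cpM[OF that] nv] by auto
    have "norm (z - cp z) = \<bar>(z - cp z) \<bullet> nrm (cp z)\<bar> * norm (nrm (cp z))" by (subst e) simp
    then have "norm (z - cp z) = (z - cp z) \<bullet> nrm (cp z)" using s nrm_unit[OF cpM[OF that]] by simp
    then show ?thesis using e by simp
  qed
  define Psi where "Psi z = Phi (cp z, norm (z - cp z))" for z
  have Psi_cont: "continuous_on Ext Psi"
  proof -
    have c1: "continuous_on Ext (\<lambda>z. (cp z, norm (z - cp z)))"
      unfolding cp_def by (intro continuous_intros continuous_on_closest_point[OF cvx D_closed Dne])
    have "(\<lambda>z. (cp z, norm (z - cp z))) ` Ext \<subseteq> M \<times> UNIV" using cpM by auto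
    then show ?thesis unfolding Psi_def
      by (rule continuous_on_compose2[OF Phi_cont c1])
  qed
  have Psi_inj: "inj_on Psi Ext"
  proof (rule inj_onI)
    fix z1 z2 assume z: "z1 \<in> Ext" "z2 \<in> Ext" "Psi z1 = Psi z2"
    define s1 where "s1 = norm (z1 - cp z1)"
    define s2 where "s2 = norm (z2 - cp z2)"
    have s: "s1 > 0" "s2 > 0" using z cpD[of z1] cpD[of z2] by (auto simp: s1_def s2_def Ext_def)
    let ?x = "Psi z1"
    have "cp z1 - ?x = s1 *\<^sub>R Rb (cp z1)" by (simp add: Psi_def Phi_def s1_def)
    moreover have "cp z2 - ?x = s2 *\<^sub>R Rb (cp z2)" using z(3) by (simp add: Psi_def Phi_def s2_def)
    ultimately have c: "cp z1 = cp z2" using uniq cpM z s by blast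
    then have "s1 *\<^sub>R Rb (cp z1) = s2 *\<^sub>R Rb (cp z1)"
      using z(3) by (simp add: Psi_def Phi_def s1_def s2_def)
    moreover have "Rb (cp z1) \<noteq> 0" using Rb_norm[OF cpM[OF z(1)]] nq_pos[OF cpM[OF z(1)]] by auto
    ultimately have "s1 = s2" by simp
    moreover have "z1 = s1 *\<^sub>R nrm (cp z1) + cp z1" using cpn[OF z(1)] by (simp add: s1_def eq_diff_eq)
    moreover have "z2 = s2 *\<^sub>R nrm (cp z2) + cp z2" using cpn[OF z(2)] by (simp add: s2_def eq_diff_eq)
    ultimately show "z1 = z2" using c by simp
  qed
  define I where "I = Psi ` Ext"
  have I_eq: "I = Phi ` (M \<times> {0<..})"
  proof
    show "I \<subseteq> Phi ` (M \<times> {0<..})"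
    proof
      fix y assume "y \<in> I"
      then obtain z where z: "z \<in> Ext" "y = Psi z" by (auto simp: I_def)
      have "norm (z - cp z) > 0" using z cpD[of z] by (auto simp: Ext_def)
      then show "y \<in> Phi ` (M \<times> {0<..})" using z cpM by (auto simp: Psi_def)
    qed
  next
    show "Phi ` (M \<times> {0<..}) \<subseteq> I"
    proof
      fix y assume "y \<in> Phi ` (M \<times> {0<..})"
      then obtain p r where pr: "p \<in> M" "r > 0" "y = Phi (p, r)" by auto
      let ?z = "p + r *\<^sub>R nrm p"
      have zE: "?z \<in> Ext" using closest_M[OF pr(1,2)] by (simp add: Ext_def)
      have "cp ?z = p" using closest_M[OF pr(1,2)] by (simp add: cp_def)
      moreover have "norm (?z - p) = r" using pr nrm_unit[OF pr(1)] by simp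
      ultimately have "Psi ?z = y" using pr by (simp add: Psi_def)
      then show "y \<in> I" using zE by (auto simp: I_def)
    qed
  qed
  have IE: "I \<subseteq> Ext"
  proof
    fix y assume "y \<in> I"
    then obtain p r where pr: "p \<in> M" "r > 0" "y = Phi (p, r)" using I_eq by auto
    have "p - y = r *\<^sub>R Rb p" using pr by (simp add: Phi_def)
    then have "y - p = (- r) *\<^sub>R Rb p" by (metis minus_diff_eq scaleR_minus_left)
    moreover have "- r \<noteq> 0" using pr(2) by simp
    ultimately have "y \<notin> D" using off_D[OF pr(1)] by blast
    then show "y \<in> Ext" by (simp add: Ext_def)
  qed
  have oI: "open I" unfolding I_def by (rule invariance_of_domain[OF Psi_cont oE Psi_inj])
  have clI: "x' \<in> I" if x': "x' \<in> Ext" "x' \<in> closure I" for x'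
  proof -
    obtain \<delta> where dl: "\<delta> > 0" "ball x' \<delta> \<subseteq> Ext" using oE x'(1) open_contains_ball by blast
    define s1 where "s1 = (\<delta> / 2) * rho"
    define s2 where "s2 = (norm x' + \<delta> + Bm) * Bm"
    define C where "C = Phi ` (M \<times> {s1..s2})"
    have s1: "s1 > 0" using dl rho by (simp add: s1_def)
    have cC: "compact C" unfolding C_def
      by (rule compact_continuous_image[OF continuous_on_subset[OF Phi_cont]])
         (auto intro: compact_Times M_compact)
    have CI: "C \<subseteq> I" unfolding C_def I_eq using s1 by auto
    have IC: "I \<inter> ball x' (\<delta> / 2) \<subseteq> C"
    proof
      fix y assume y: "y \<in> I \<inter> ball x' (\<delta> / 2)"
      then obtain p r where pr: "p \<in> M" "r > 0" "y = Phi (p, r)" using I_eq by auto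
      have yp: "norm (y - p) = r / (nrm p \<bullet> p)"
        using pr Rb_norm[OF pr(1)] nq_pos[OF pr(1)] by (simp add: Phi_def)
      have pD: "p \<in> D" using pr M_sub by blast
      have "p \<notin> ball x' \<delta>" using dl pD by (auto simp: Ext_def)
      then have "dist x' p \<ge> \<delta>" by simp
      moreover have "dist x' y < \<delta> / 2" using y by simp
      ultimately have lo: "norm (y - p) \<ge> \<delta> / 2" using dist_triangle[of x' p y]
        by (simp add: dist_norm norm_minus_commute)
      have hi: "norm (y - p) \<le> norm x' + \<delta> + Bm"
      proof -
        have "norm (y - p) \<le> norm y + norm p" by (rule norm_triangle_ineq4)
        moreover have "norm y \<le> norm x' + \<delta>" using y norm_triangle_ineq2[of y x'] dl(1)
          by (simp add: dist_norm norm_minus_commute)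
        moreover have "norm p \<le> Bm" using Bm(2) pD by blast
        ultimately show ?thesis by linarith
      qed
      have k: "nrm p \<bullet> p \<ge> rho" "nrm p \<bullet> p \<le> Bm" "nrm p \<bullet> p > 0" using nrm_q nq_le nq_pos pr by auto
      have "r = norm (y - p) * (nrm p \<bullet> p)" using yp k by (simp add: field_simps)
      moreover have "s1 \<le> norm (y - p) * (nrm p \<bullet> p)" unfolding s1_def
        by (rule mult_mono) (use lo k rho dl in auto)
      moreover have "norm (y - p) * (nrm p \<bullet> p) \<le> s2" unfolding s2_def
        by (rule mult_mono) (use hi k dl(1) Bm(1) norm_ge_zero[of x'] in linarith)+
      ultimately have "r \<ge> s1" "r \<le> s2" by auto
      then show "y \<in> C" using pr by (auto simp: C_def)
    qed
    have "x' \<in> closure C"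
      unfolding closure_approachable
    proof (intro allI impI)
      fix e :: real assume e: "e > 0"
      have "min e (\<delta> / 2) > 0" using e dl by simp
      then obtain y where "y \<in> I" "dist y x' < min e (\<delta> / 2)"
        using x'(2) unfolding closure_approachable by blast
      then have "y \<in> C" "dist y x' < e" using IC by (auto simp: dist_commute)
      then show "\<exists>y\<in>C. dist y x' < e" by blast
    qed
    moreover have "closed C" using cC compact_imp_closed by blast
    ultimately have "x' \<in> C" using closure_closed by blast
    then show ?thesis using CI by blast
  qed
  have "Ext \<subseteq> I"
  proof -
    have cE: "connected Ext" unfolding Ext_def
    proof (rule connected_complement_bounded_convex[OF D_bounded cvx])
      have "CARD('d) > 0" using card_gt_0_iff[of "UNIV::'d set"] by simp
      moreover have "DIM('d phase) = CARD('d) + CARD('d)" by simp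
      ultimately show "2 \<le> DIM('d phase)" by linarith
    qed
    have op: "openin (top_of_set Ext) I" using oI IE by (simp add: open_subset)
    have cl: "closedin (top_of_set Ext) I"
      unfolding closedin_closed
    proof (intro exI conjI)
      show "closed (closure I)" by simp
      show "I = Ext \<inter> closure I" using IE clI closure_subset by blast
    qed
    have "I \<noteq> {}"
    proof -
      obtain p where "p \<in> M" using M_ne by blast
      then have "Phi (p, 1) \<in> I" using I_eq by auto
      then show ?thesis by blast
    qed
    then show ?thesis using cE op cl unfolding connected_clopen by blast
  qed
  then have "x \<in> I" using x by (auto simp: Ext_def)
  then obtain p r where pr: "p \<in> M" "r > 0" "x = Phi (p, r)" using I_eq by auto
  then have "p - x = r *\<^sub>R Rb p" by (simp add: Phi_def)
  then show ?thesis using pr by blast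
qed

lemma mm:
  assumes x: "x \<notin> D"
  shows "m_minus M x \<in> M" "\<exists>l>0. m_minus M x - x = l *\<^sub>R Rb (m_minus M x)"
proof -
  have P: "(\<lambda>m. m \<in> M \<and> (\<exists>l>0. m - x = l *\<^sub>R reeb M m)) = (\<lambda>m. m \<in> M \<and> (\<exists>l>0. m - x = l *\<^sub>R Rb m))"
    using reeb_M by (auto intro!: ext)
  obtain m where m: "m \<in> M" "\<exists>l>0. m - x = l *\<^sub>R Rb m" using existence[OF x] by blast
  have "m_minus M x = m"
    unfolding m_minus_def P
  proof (rule the_equality)
    show "m \<in> M \<and> (\<exists>l>0. m - x = l *\<^sub>R Rb m)" using m by blast
    fix m' assume "m' \<in> M \<and> (\<exists>l>0. m' - x = l *\<^sub>R Rb m')"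
    then show "m' = m" using uniq m by blast
  qed
  then show "m_minus M x \<in> M" "\<exists>l>0. m_minus M x - x = l *\<^sub>R Rb (m_minus M x)" using m by auto
qed

end

definition sg :: "'a::real_normed_vector \<Rightarrow> 'a" where "sg a = (1 / norm a) *\<^sub>R a"

lemma nl:
  fixes a b :: "'a::real_normed_vector"
  assumes b: "b \<noteq> 0"
  shows "norm (sg a - sg b) \<le> 2 * norm (a - b) / norm b"
proof (cases "a = 0")
  case True
  then show ?thesis using b by (simp add: sg_def)
next
  case False
  let ?na = "norm a" and ?nb = "norm b"
  have na: "?na > 0" using False by simp
  have nb: "?nb > 0" using b by simp
  have 1: "sg a - sg b = (sg a - (1 / ?nb) *\<^sub>R a) + (1 / ?nb) *\<^sub>R (a - b)"
    by (simp add: sg_def scaleR_diff_right)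
  have 2: "norm (sg a - (1 / ?nb) *\<^sub>R a) = \<bar>1 / ?na - 1 / ?nb\<bar> * ?na"
    by (simp only: sg_def scaleR_diff_left[symmetric] norm_scaleR)
  have "(1 / ?na - 1 / ?nb) * ?na = (?nb - ?na) / ?nb" using na nb by (simp add: field_simps)
  then have 3: "\<bar>1 / ?na - 1 / ?nb\<bar> * ?na = \<bar>?nb - ?na\<bar> / ?nb" using na nb
    by (metis abs_divide abs_mult abs_of_pos)
  have 4: "\<bar>?nb - ?na\<bar> \<le> norm (a - b)" using norm_triangle_ineq3[of a b] by (simp add: abs_minus_commute)
  have "norm (sg a - sg b) \<le> norm (sg a - (1 / ?nb) *\<^sub>R a) + norm ((1 / ?nb) *\<^sub>R (a - b))"
    unfolding 1 by (rule norm_triangle_ineq)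
  also have "\<dots> = \<bar>?nb - ?na\<bar> / ?nb + norm (a - b) / ?nb" using 2 3 by simp
  also have "\<dots> \<le> norm (a - b) / ?nb + norm (a - b) / ?nb"
  proof -
    have "\<bar>?nb - ?na\<bar> / ?nb \<le> norm (a - b) / ?nb" by (rule divide_right_mono[OF 4]) (use nb in simp)
    then show ?thesis by linarith
  qed
  finally show ?thesis by simp
qed

context setting begin

lemma ptL:
  assumes m: "m \<in> M" and nm: "nrm m = sg a" and b: "b \<noteq> 0"
  shows "norm (m - pt b) \<le> norm (a - b) / (kap * norm b)"
proof -
  have "norm (m - pt b) \<le> norm (nrm m - nrm (pt b)) / (2 * kap)" using LIP' m pt_M[OF b] by blast
  also have "nrm (pt b) = sg b" using pt_nrm[OF b] by (simp add: sg_def)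
  also have "norm (nrm m - sg b) / (2 * kap) \<le> (2 * norm (a - b) / norm b) / (2 * kap)"
    by (rule divide_right_mono) (use nl[OF b, of a] nm kap_pos in auto)
  also have "\<dots> = norm (a - b) / (kap * norm b)" by simp
  finally show ?thesis .
qed

lemma W_upper: "W u \<le> 2 * Bm * norm u"
proof -
  have "W u \<le> norm u * norm (pt u - pt (- u))" unfolding W_def by (rule norm_cauchy_schwarz)
  also have "norm (pt u - pt (- u)) \<le> 2 * Bm"
  proof -
    have "norm (pt u - pt (- u)) \<le> norm (pt u) + norm (pt (- u))" by (rule norm_triangle_ineq4)
    also have "\<dots> \<le> Bm + Bm" using Bm(2)[OF pt(1)] Bm(2)[OF pt(1)] by (intro add_mono) auto
    finally show ?thesis by simp
  qed
  then have "norm u * norm (pt u - pt (- u)) \<le> norm u * (2 * Bm)" by (simp add: mult_left_mono)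
  finally show ?thesis by (simp add: algebra_simps)
qed

lemma W_lower: "W u \<ge> 2 * rho * norm u"
proof (cases "u = 0")
  case True then show ?thesis by (simp add: W_def)
next
  case False
  let ?a = "rho *\<^sub>R sg u"
  have "?a \<in> cball 0 rho" "- ?a \<in> cball 0 rho" using False rho by (auto simp: sg_def)
  then have "?a \<in> D" "- ?a \<in> D" using rho by auto
  then have "u \<bullet> (?a - (- ?a)) \<le> W u" by (rule W_max)
  moreover have "u \<bullet> (?a - (- ?a)) = 2 * rho * norm u"
  proof -
    have uu: "u \<bullet> u = norm u * norm u" using power2_norm_eq_inner[of u] by (simp add: power2_eq_square)
    have "u \<bullet> (?a - (- ?a)) = 2 * (rho / norm u) * (u \<bullet> u)" by (simp add: sg_def inner_add_right)
    also have "\<dots> = 2 * rho * norm u" using False by (simp add: uu)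
    finally show ?thesis .
  qed
  ultimately show ?thesis by simp
qed

definition H where "H x = Hfun M x"

lemma H_W: "H x = W (- cJ x)" by (simp add: H_def Hfun_W)
lemma H_upper: "H x \<le> 2 * Bm * norm x" using W_upper[of "- cJ x"] by (simp add: H_W cJ_simps)
lemma H_lower: "H x \<ge> 2 * rho * norm x" using W_lower[of "- cJ x"] by (simp add: H_W cJ_simps)
lemma H_nonneg: "H x \<ge> 0" using H_lower[of x] rho by (smt (verit) mult_nonneg_nonneg norm_ge_zero)

abbreviation "T \<equiv> osb_map M"

lemma Tfacts:
  assumes x: "x \<notin> D"
  shows "m_minus M x \<in> M" "nrm (m_minus M x) = sg (cJ x - cJ (m_minus M x))"
    "T x \<notin> D" "norm (T x) \<le> norm x + 2 * Bm" "T x = 2 *\<^sub>R m_minus M x - x"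
proof -
  let ?m = "m_minus M x"
  show mM: "?m \<in> M" using mm[OF x] by blast
  obtain l where l: "l > 0" "?m - x = l *\<^sub>R Rb ?m" using mm[OF x] by blast
  let ?k = "nrm ?m \<bullet> ?m"
  have k: "?k > 0" using nq_pos[OF mM] .
  have e: "?m - x = (l / ?k) *\<^sub>R cJ (nrm ?m)" using l by (simp add: Rb_def)
  have "cJ x - cJ ?m = - cJ (?m - x)" by (simp add: cJ_simps)
  also have "\<dots> = (l / ?k) *\<^sub>R nrm ?m" using e by (simp add: cJ_simps)
  finally have ce: "cJ x - cJ ?m = (l / ?k) *\<^sub>R nrm ?m" .
  have lk: "l / ?k > 0" using l k by simp
  have "norm (cJ x - cJ ?m) = l / ?k" using ce lk nrm_unit[OF mM] l(1) k by simp
  then show "nrm ?m = sg (cJ x - cJ ?m)" using ce lk l(1) k by (simp add: sg_def)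
  show Te: "T x = 2 *\<^sub>R ?m - x" by (simp add: osb_map_def)
  have "T x - ?m = ?m - x" using Te by (simp add: scaleR_2)
  then have "T x - ?m = l *\<^sub>R Rb ?m" using l(2) by simp
  moreover have "l \<noteq> 0" using l(1) by simp
  ultimately show "T x \<notin> D" using off_D[OF mM] by blast
  have "norm (T x) \<le> norm (2 *\<^sub>R ?m) + norm x" unfolding Te by (rule norm_triangle_ineq4)
  also have "norm (2 *\<^sub>R ?m) \<le> 2 * Bm" using Bm(2)[of ?m] mM M_sub by auto
  finally show "norm (T x) \<le> norm x + 2 * Bm" by simp
qed

definition K0 where "K0 = 48 * Bm^2 / kap"
definition C0 where "C0 = 4 * Bm * K0 + K0^2"
definition R0 where "R0 = 8 * Bm + 1"

lemma K0_pos: "K0 > 0" using Bm kap_pos by (simp add: K0_def)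

lemma step_W:
  assumes x: "x \<notin> D" and nx: "norm x \<ge> R0"
  shows "\<bar>W (- cJ (T (T x))) - W (- cJ x)\<bar> \<le> K0 / norm x"
proof -
  define y where "y = - cJ x"
  have ny: "norm y = norm x" by (simp add: y_def cJ_simps)
  have yb: "norm y \<ge> 8 * Bm + 1" using nx ny by (simp add: R0_def)
  then have ynz: "y \<noteq> 0" using Bm by auto
  have ypos: "norm y > 0" using ynz by simp
  define m1 where "m1 = m_minus M x"
  have m1: "m1 \<in> M" "nrm m1 = sg (cJ x - cJ m1)" using Tfacts[OF x] by (auto simp: m1_def)
  define x1 where "x1 = T x"
  have x1: "x1 \<notin> D" "x1 = 2 *\<^sub>R m1 - x" using Tfacts[OF x] by (auto simp: x1_def m1_def)
  define m2 where "m2 = m_minus M x1"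
  have m2: "m2 \<in> M" "nrm m2 = sg (cJ x1 - cJ m2)" using Tfacts[OF x1(1)] by (auto simp: m2_def)
  have x2: "T (T x) = 2 *\<^sub>R m2 - x1" using Tfacts[OF x1(1)] by (simp add: x1_def m2_def)
  have bm1: "norm m1 \<le> Bm" "norm m2 \<le> Bm" using Bm(2)[of m1] Bm(2)[of m2] m1(1) m2(1) M_sub by auto
  have nmy: "- y \<noteq> 0" using ynz by simp
  have e1: "norm (m1 - pt (- y)) \<le> Bm / (kap * norm y)"
  proof -
    have "norm (m1 - pt (- y)) \<le> norm ((cJ x - cJ m1) - (- y)) / (kap * norm (- y))"
      by (rule ptL[OF m1 nmy])
    also have "(cJ x - cJ m1) - (- y) = - cJ m1" by (simp add: y_def)
    finally have "norm (m1 - pt (- y)) \<le> norm m1 / (kap * norm y)" by (simp add: cJ_simps)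
    moreover have "norm m1 / (kap * norm y) \<le> Bm / (kap * norm y)"
      by (rule divide_right_mono) (use bm1 kap_pos ypos in auto)
    ultimately show ?thesis by linarith
  qed
  have e2: "norm (m2 - pt y) \<le> 3 * Bm / (kap * norm y)"
  proof -
    have "norm (m2 - pt y) \<le> norm ((cJ x1 - cJ m2) - y) / (kap * norm y)"
      by (rule ptL[OF m2 ynz])
    also have "(cJ x1 - cJ m2) - y = 2 *\<^sub>R cJ m1 - cJ m2" by (simp add: x1(2) y_def cJ_simps)
    also have "norm (2 *\<^sub>R cJ m1 - cJ m2) \<le> 3 * Bm"
    proof -
      have "norm (2 *\<^sub>R cJ m1 - cJ m2) \<le> norm (2 *\<^sub>R cJ m1) + norm (cJ m2)" by (rule norm_triangle_ineq4)
      also have "\<dots> \<le> 3 * Bm" using bm1 by (simp add: cJ_simps)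
      finally show ?thesis .
    qed
    then have "norm (2 *\<^sub>R cJ m1 - cJ m2) / (kap * norm y) \<le> 3 * Bm / (kap * norm y)"
      using kap_pos ypos by (simp add: divide_right_mono)
    finally show ?thesis .
  qed
  define A where "A = pt y - pt (- y)"
  define e where "e = (m2 - pt y) - (m1 - pt (- y))"
  have ne: "norm e \<le> 4 * Bm / (kap * norm y)"
  proof -
    have "norm e \<le> norm (m2 - pt y) + norm (m1 - pt (- y))" unfolding e_def by (rule norm_triangle_ineq4)
    moreover have "3 * Bm / (kap * norm y) + Bm / (kap * norm y) = 4 * Bm / (kap * norm y)"
      by (simp add: add_divide_distrib[symmetric])
    ultimately show ?thesis using e1 e2 by linarith
  qed
  have mdiff: "m2 - m1 = A + e" by (simp add: A_def e_def)
  define \<delta> where "\<delta> = - 2 *\<^sub>R cJ (m2 - m1)"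
  have y2: "- cJ (T (T x)) = y + \<delta>"
    by (simp add: x2 x1(2) y_def \<delta>_def cJ_simps algebra_simps)
  have nd: "norm \<delta> \<le> 4 * Bm"
  proof -
    have "norm \<delta> = 2 * norm (cJ (m2 - m1))" by (simp add: \<delta>_def)
    also have "norm (cJ (m2 - m1)) = norm (m2 - m1)" by (rule cJ_simps(6))
    finally have "norm \<delta> = 2 * norm (m2 - m1)" .
    also have "norm (m2 - m1) \<le> norm m2 + norm m1" by (rule norm_triangle_ineq4)
    finally show ?thesis using bm1 by simp
  qed
  have nA: "norm A \<le> 2 * Bm"
  proof -
    have "norm A \<le> norm (pt y) + norm (pt (- y))" unfolding A_def by (rule norm_triangle_ineq4)
    also have "\<dots> \<le> Bm + Bm" using Bm(2)[OF pt(1)] Bm(2)[OF pt(1)] by (intro add_mono) auto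
    finally show ?thesis by simp
  qed
  have ydnz: "y + \<delta> \<noteq> 0"
  proof
    assume "y + \<delta> = 0"
    then have "norm y = norm \<delta>" by (metis add_eq_0_iff norm_minus_cancel)
    then show False using nd yb Bm by linarith
  qed
  define A' where "A' = pt (y + \<delta>) - pt (- (y + \<delta>))"
  have Wy: "W y = y \<bullet> A" by (simp add: W_def A_def)
  have Wyd: "W (y + \<delta>) = (y + \<delta>) \<bullet> A'" by (simp add: W_def A'_def)
  have lo: "W (y + \<delta>) \<ge> W y + \<delta> \<bullet> A"
  proof -
    have "(y + \<delta>) \<bullet> A \<le> W (y + \<delta>)" unfolding A_def by (rule W_max[OF pt(1) pt(1)])
    then show ?thesis using Wy by (simp add: inner_add_left)
  qed
  have hi: "W (y + \<delta>) \<le> W y + \<delta> \<bullet> A'"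
  proof -
    have "y \<bullet> A' \<le> W y" unfolding A'_def by (rule W_max[OF pt(1) pt(1)])
    then show ?thesis using Wyd by (simp add: inner_add_left)
  qed
  have dA: "\<bar>\<delta> \<bullet> A\<bar> \<le> 16 * Bm^2 / (kap * norm y)"
  proof -
    have "\<delta> \<bullet> A = - 2 * (cJ e \<bullet> A)"
      by (simp add: \<delta>_def mdiff cJ_simps inner_add_left)
    then have "\<bar>\<delta> \<bullet> A\<bar> = 2 * \<bar>cJ e \<bullet> A\<bar>" by simp
    also have "\<bar>cJ e \<bullet> A\<bar> \<le> norm (cJ e) * norm A" by (rule Cauchy_Schwarz_ineq2)
    also have "norm (cJ e) * norm A \<le> (4 * Bm / (kap * norm y)) * (2 * Bm)"
      using ne nA Bm(1) kap_pos ypos by (intro mult_mono) (auto simp: cJ_simps)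
    finally show ?thesis by (simp add: power2_eq_square)
  qed
  have nAA: "norm (A' - A) \<le> 8 * Bm / (kap * norm y)"
  proof -
    have p1: "norm (pt (y + \<delta>) - pt y) \<le> norm \<delta> / (kap * norm y)"
      using ptL[OF pt_M[OF ydnz] _ ynz, of "y + \<delta>"] pt_nrm[OF ydnz] by (simp add: sg_def)
    have ydnz': "- (y + \<delta>) \<noteq> 0" using ydnz by (metis minus_zero minus_minus)
    have p2: "norm (pt (- (y + \<delta>)) - pt (- y)) \<le> norm \<delta> / (kap * norm y)"
      using ptL[OF pt_M[OF ydnz'] _ nmy, of "- (y + \<delta>)"] pt_nrm[OF ydnz'] by (simp add: sg_def)
    have "A' - A = (pt (y + \<delta>) - pt y) - (pt (- (y + \<delta>)) - pt (- y))" by (simp add: A_def A'_def)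
    then have "norm (A' - A) \<le> norm (pt (y + \<delta>) - pt y) + norm (pt (- (y + \<delta>)) - pt (- y))"
      by (metis norm_triangle_ineq4)
    also have "\<dots> \<le> 2 * (norm \<delta> / (kap * norm y))" using p1 p2 by simp
    also have "\<dots> \<le> 2 * (4 * Bm / (kap * norm y))"
      using nd kap_pos ypos by (simp add: divide_right_mono)
    finally show ?thesis by simp
  qed
  have dAA: "\<bar>\<delta> \<bullet> (A' - A)\<bar> \<le> 32 * Bm^2 / (kap * norm y)"
  proof -
    have "\<bar>\<delta> \<bullet> (A' - A)\<bar> \<le> norm \<delta> * norm (A' - A)" by (rule Cauchy_Schwarz_ineq2)
    also have "\<dots> \<le> (4 * Bm) * (8 * Bm / (kap * norm y))"
      using nd nAA Bm(1) by (intro mult_mono) auto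
    finally show ?thesis by (simp add: power2_eq_square)
  qed
  have "\<bar>W (y + \<delta>) - W y\<bar> \<le> 48 * Bm^2 / (kap * norm y)"
  proof -
    have s: "\<delta> \<bullet> A' = \<delta> \<bullet> A + \<delta> \<bullet> (A' - A)" by (simp add: inner_diff_right)
    define Q where "Q = Bm^2 / (kap * norm y)"
    have q1: "16 * Bm^2 / (kap * norm y) = 16 * Q" by (simp add: Q_def)
    have q2: "32 * Bm^2 / (kap * norm y) = 32 * Q" by (simp add: Q_def)
    have q3: "48 * Bm^2 / (kap * norm y) = 48 * Q" by (simp add: Q_def)
    have "\<bar>\<delta> \<bullet> A\<bar> \<le> 16 * Q" using dA q1 by simp
    moreover have "\<bar>\<delta> \<bullet> (A' - A)\<bar> \<le> 32 * Q" using dAA q2 by simp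
    ultimately have "\<bar>W (y + \<delta>) - W y\<bar> \<le> 48 * Q" using lo hi s by linarith
    then show ?thesis using q3 by simp
  qed
  then show ?thesis using y2 ny by (simp add: K0_def y_def)
qed

lemma step_H:
  assumes x: "x \<notin> D" and nx: "norm x \<ge> R0"
  shows "\<bar>(H (T (T x)))^2 - (H x)^2\<bar> \<le> C0"
proof -
  have d: "\<bar>H (T (T x)) - H x\<bar> \<le> K0 / norm x" using step_W[OF assms] by (simp add: H_W)
  have n1: "norm x \<ge> 1" using nx Bm by (simp add: R0_def)
  have kx: "K0 / norm x \<le> K0" using n1 K0_pos by (simp add: divide_le_eq)
  have sum: "H (T (T x)) + H x \<le> 4 * Bm * norm x + K0 / norm x"
  proof -
    have "H (T (T x)) \<le> H x + K0 / norm x" using d by (simp add: abs_le_iff)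
    then show ?thesis using H_upper[of x] by linarith
  qed
  have "\<bar>(H (T (T x)))^2 - (H x)^2\<bar> = \<bar>H (T (T x)) - H x\<bar> * (H (T (T x)) + H x)"
  proof -
    have "(H (T (T x)))^2 - (H x)^2 = (H (T (T x)) - H x) * (H (T (T x)) + H x)"
      by (simp add: power2_eq_square algebra_simps)
    then have "\<bar>(H (T (T x)))^2 - (H x)^2\<bar> = \<bar>H (T (T x)) - H x\<bar> * \<bar>H (T (T x)) + H x\<bar>"
      by (simp add: abs_mult)
    moreover have "\<bar>H (T (T x)) + H x\<bar> = H (T (T x)) + H x" using H_nonneg[of x] H_nonneg[of "T (T x)"] by simp
    ultimately show ?thesis by simp
  qed
  also have "\<dots> \<le> (K0 / norm x) * (4 * Bm * norm x + K0 / norm x)"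
    using d sum H_nonneg[of x] H_nonneg[of "T (T x)"] K0_pos n1 by (intro mult_mono) auto
  also have "\<dots> = 4 * Bm * K0 + K0 * (K0 / norm x) / norm x"
  proof -
    have "norm x \<noteq> 0" using n1 by auto
    then show ?thesis by (simp add: field_simps power2_eq_square)
  qed
  also have "K0 * (K0 / norm x) / norm x \<le> K0 * K0"
  proof -
    have "K0 * (K0 / norm x) \<le> K0 * K0" by (rule mult_left_mono[OF kx]) (use K0_pos in simp)
    moreover have dv: "a / norm x \<le> a" if "a \<ge> 0" for a
    proof -
      have "a * 1 \<le> a * norm x" by (rule mult_left_mono) (use n1 that in auto)
      then show ?thesis using n1 that by (simp add: divide_le_eq)
    qed
    have "K0 * (K0 / norm x) \<ge> 0" using K0_pos n1 by simp
    then have "K0 * (K0 / norm x) / norm x \<le> K0 * (K0 / norm x)" by (rule dv)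
    ultimately show ?thesis by linarith
  qed
  finally show ?thesis by (simp add: C0_def power2_eq_square)
qed

theorem main:
  "\<exists>\<Lambda>>0. \<exists>C>0. \<forall>x. \<forall>k::nat. Hfun M x \<ge> \<Lambda> \<longrightarrow> k \<ge> 1 \<longrightarrow>
     \<bar>(Hfun M ((osb_map M ^^ (2 * k)) x))\<^sup>2 - (Hfun M x)\<^sup>2\<bar> \<le> C * real k"
proof -
  define \<Lambda> where "\<Lambda> = 2 * Bm * R0"
  define \<Lambda>2 where "\<Lambda>2 = 2 * Bm * (\<Lambda> / (2 * rho) + 4 * Bm)"
  define C where "C = C0 + \<Lambda>2^2 + \<Lambda>^2 + 1"
  have Lp: "\<Lambda> > 0" using Bm by (simp add: \<Lambda>_def R0_def)
  have C0p: "C0 \<ge> 0" using K0_pos Bm by (simp add: C0_def)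
  have Cp: "C > 0" using C0p by (simp add: C_def add_nonneg_pos)
  have big: "norm z \<ge> R0 \<and> z \<notin> D" if "H z \<ge> \<Lambda>" for z
  proof -
    have "2 * Bm * R0 \<le> 2 * Bm * norm z" using that H_upper[of z] by (simp add: \<Lambda>_def)
    then have "R0 \<le> norm z" using Bm by simp
    moreover have "z \<notin> D"
    proof
      assume "z \<in> D" then have "norm z \<le> Bm" using Bm by blast
      then show False using \<open>R0 \<le> norm z\<close> Bm by (simp add: R0_def)
    qed
    ultimately show ?thesis by blast
  qed
  have small: "H (T (T z)) \<le> \<Lambda>2" if "z \<notin> D" "H z < \<Lambda>" for z
  proof -
    have "2 * rho * norm z \<le> H z" by (rule H_lower)
    then have nz: "norm z \<le> \<Lambda> / (2 * rho)" using that rho by (simp add: field_simps)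
    have "norm (T (T z)) \<le> norm (T z) + 2 * Bm" using Tfacts(3,4)[OF that(1)] Tfacts(4) by blast
    also have "norm (T z) \<le> norm z + 2 * Bm" using Tfacts(4)[OF that(1)] .
    finally have "norm (T (T z)) \<le> \<Lambda> / (2 * rho) + 4 * Bm" using nz by simp
    then have "2 * Bm * norm (T (T z)) \<le> \<Lambda>2" using Bm by (simp add: \<Lambda>2_def)
    then show ?thesis using H_upper[of "T (T z)"] by linarith
  qed
  have L2: "\<Lambda>2 \<ge> 0" using Bm rho Lp by (simp add: \<Lambda>2_def)
  have main: "(T ^^ (2 * j)) x \<notin> D \<and> \<bar>(H ((T ^^ (2 * j)) x))^2 - (H x)^2\<bar> \<le> C * real j"
    if x: "H x \<ge> \<Lambda>" for x j
  proof (induction j)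
    case 0
    then show ?case using big[OF x] by simp
  next
    case (Suc j)
    let ?z = "(T ^^ (2 * j)) x"
    have zD: "?z \<notin> D" using Suc by blast
    have ih: "\<bar>(H ?z)^2 - (H x)^2\<bar> \<le> C * real j" using Suc by blast
    have eq: "(T ^^ (2 * Suc j)) x = T (T ?z)" by simp
    have nD: "T (T ?z) \<notin> D" using Tfacts(3)[OF Tfacts(3)[OF zD]] .
    have "\<bar>(H (T (T ?z)))^2 - (H x)^2\<bar> \<le> C * real (Suc j)"
    proof (cases "H ?z \<ge> \<Lambda>")
      case True
      then have "\<bar>(H (T (T ?z)))^2 - (H ?z)^2\<bar> \<le> C0" using big step_H by blast
      then have a1: "(H (T (T ?z)))^2 - (H ?z)^2 \<le> C0" "(H ?z)^2 - (H (T (T ?z)))^2 \<le> C0"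
        by (simp_all add: abs_le_iff)
      have a2: "(H ?z)^2 - (H x)^2 \<le> C * real j" "(H x)^2 - (H ?z)^2 \<le> C * real j"
        using ih by (simp_all add: abs_le_iff)
      have "C0 \<le> C" by (simp add: C_def)
      moreover have "C * real (Suc j) = C * real j + C" by (simp add: algebra_simps)
      ultimately show ?thesis using a1 a2 by (simp only: abs_le_iff) linarith
    next
      case False
      then have hs: "H (T (T ?z)) \<le> \<Lambda>2" using small zD by simp
      have h0: "H (T (T ?z)) \<ge> 0" by (rule H_nonneg)
      have sq1: "(H (T (T ?z)))^2 \<le> \<Lambda>2^2" using hs h0 by (simp add: power_mono)
      have sq2: "(H ?z)^2 \<le> \<Lambda>^2" using False H_nonneg[of ?z] by (simp add: power_mono)
      have b1: "(H x)^2 \<ge> 0" by simp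
      have a2: "(H x)^2 - (H ?z)^2 \<le> C * real j"
        using ih by (simp add: abs_le_iff)
      have b3: "C * real j \<ge> 0" using Cp by simp
      have b4: "(H (T (T ?z)))^2 \<ge> 0" by simp
      have c1: "\<Lambda>2^2 \<le> C" "\<Lambda>^2 \<le> C" using C0p by (simp_all add: C_def)
      have c2: "C * real (Suc j) = C * real j + C" by (simp add: algebra_simps)
      show ?thesis using sq1 sq2 b1 a2 b3 b4 c1 c2 by (simp only: abs_le_iff) linarith
    qed
    then show ?case using eq nD by simp
  qed
  show ?thesis
    using main Lp Cp unfolding H_def by blast
qed

end

theorem theorem3p5:
  fixes M D :: "'d::finite phase set" and F :: "'d phase \<Rightarrow> real" and c :: real
  assumes "compact D" and "convex D" and "0 \<in> interior D"
    and "\<And>x y. x \<in> D \<Longrightarrow> y \<in> D \<Longrightarrow> x \<noteq> y \<Longrightarrow> open_segment x y \<subseteq> interior D"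
    and "M = frontier D"
    and "smooth_fun F" and "posdef_hessian F"
    and "M = {x. F x = c}"
    and "\<And>q. q \<in> M \<Longrightarrow> frechet_derivative F (at q) \<noteq> (\<lambda>_. 0)"
  shows "\<exists>\<Lambda>>0. \<exists>C>0. \<forall>x. \<forall>k::nat. Hfun M x \<ge> \<Lambda> \<longrightarrow> k \<ge> 1 \<longrightarrow>
           \<bar>(Hfun M ((osb_map M ^^ (2 * k)) x))\<^sup>2 - (Hfun M x)\<^sup>2\<bar> \<le> C * real k"
proof -
  have st: "setting M D F c" unfolding setting_def using assms by blast
  interpret setting M D F c by (rule st)
  show ?thesis by (rule main)
qed

end
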